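(* Let $\mathcal C,\mathcal D$ be parsummable categories, $F\colon\mathcal C\to\mathcal D$ a sum-preserving functor of underlying categories, and $\mu\colon\mathbf 2\times\omega\to\omega$ a fixed injection. Then: (1) the functor $F_\mu$ preserves sums, so that $\mathrm{Cyl}(F)=(F_\mu)_*(\mathcal C\times\mathcal D)$ is a well-defined parsummable category, and $I^{(1)}\colon\mathcal C\to\mathrm{Cyl}(F)$ and $I^{(2)}\colon\mathcal D\to\mathrm{Cyl}(F)$ are morphisms of parsummable categories; (2) $I^{(1)}$ is an underlying equivalence of categories if $F$ is an equivalence of categories; (3) $I^{(2)}$ is an underlying equivalence of categories.
   Context: Let $\omega=\{1,2,\dots\}$, $\mathcal M$ the monoid of injections $\omega\to\omega$, $E\mathcal M$ the category with objects $\mathcal M$ and unique morphisms between any two objects. A parsummable category is a small $E\mathcal M$-category $\mathcal C$ (strict action; $u_*$ the action of $u$; $u^X_\circ\colon X\to u_*X$ and more generally $[v,u]\colon u_*\Rightarrow v_*$ the induced isomorphisms) in which every object $X$ has finite support $\mathrm{supp}(X)$ (the intersection of finite $A\subset\omega$ with $u_*X=X$ for all $u$ fixing $A$ pointwise), equipped with an object $0$ of empty support and a functor $+$ on the full subcategory $\mathcal C\boxtimes\mathcal C\subset\mathcal C\times\mathcal C$ of disjointly supported pairs that is strictly unital, associative, commutative and $E\mathcal M$-equivariant; morphisms are strictly equivariant functors preserving $0,+$. The product $\mathcal C\times\mathcal D$ of parsummable categories is a parsummable category with componentwise action and sum. For an injection $\phi\colon A\times\omega\to\omega$, $\phi_*(X_\bullet)=\sum_a\phi(a,-)_*(X_a)$;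 write $\mu_*\colon\mathcal D\times\mathcal D\to\mathcal D$. A functor $G\colon\mathcal C\to\mathcal D$ of underlying categories preserves sums if $G(0)=0$, $G\times G$ maps $\mathcal C\boxtimes\mathcal C$ into $\mathcal D\boxtimes\mathcal D$, and $G$ commutes with $+$ on objects and morphisms. For such $G$, $G_*\mathcal C$ is the parsummable category with objects those of $\mathcal C$, $\mathrm{Hom}_{G_*\mathcal C}(X,Y)=\mathrm{Hom}_{\mathcal D}(GX,GY)$, $\mathcal M$-action on objects from $\mathcal C$, structure isomorphisms $G(u^X_\circ)$, sum of objects from $\mathcal C$ and of morphisms from $\mathcal D$; $I\colon\mathcal C\to G_*\mathcal C$ is the identity on objects and $f\mapsto G(f)$ on morphisms. $F_\mu=\mu_*\circ(F\times\mathrm{id})\colon\mathcal C\times\mathcal D\to\mathcal D$; $\mathrm{Cyl}(F)=(F_\mu)_*(\mathcal C\times\mathcal D)$; $I^{(1)}=I\circ(-,0)\colon\mathcal C\to\mathrm{Cyl}(F)$ and $I^{(2)}=I\circ(0,-)\colon\mathcal D\to\mathrm{Cyl}(F)$. *)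

theory Defs
  imports Main
begin

record ('o,'m) cat =
  Obj  :: "'o set"
  Mor  :: "'m set"
  Dom  :: "'m \<Rightarrow> 'o"
  Cod  :: "'m \<Rightarrow> 'o"
  Idm  :: "'o \<Rightarrow> 'm"
  Comp :: "'m \<Rightarrow> 'm \<Rightarrow> 'm"   (* Comp C g f = g \<circ> f *)

definition hom :: "('o,'m,'x) cat_scheme \<Rightarrow> 'o \<Rightarrow> 'o \<Rightarrow> 'm set" where
  "hom C X Y = {f \<in> Mor C. Dom C f = X \<and> Cod C f = Y}"

definition category :: "('o,'m,'x) cat_scheme \<Rightarrow> bool" where
  "category C \<longleftrightarrow>
     (\<forall>f\<in>Mor C. Dom C f \<in> Obj C \<and> Cod C f \<in> Obj C) \<and>
     (\<forall>X\<in>Obj C. Idm C X \<in> hom C X X) \<and>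
     (\<forall>f g. f \<in> Mor C \<and> g \<in> Mor C \<and> Cod C f = Dom C g \<longrightarrow>
            Comp C g f \<in> hom C (Dom C f) (Cod C g)) \<and>
     (\<forall>f\<in>Mor C. Comp C (Idm C (Cod C f)) f = f \<and> Comp C f (Idm C (Dom C f)) = f) \<and>
     (\<forall>f g h. f \<in> Mor C \<and> g \<in> Mor C \<and> h \<in> Mor C \<and> Cod C f = Dom C g \<and> Cod C g = Dom C h
            \<longrightarrow> Comp C h (Comp C g f) = Comp C (Comp C h g) f)"

definition is_functor :: "('o,'m,'x) cat_scheme \<Rightarrow> ('p,'n,'y) cat_scheme \<Rightarrow>
    ('o \<Rightarrow> 'p) \<Rightarrow> ('m \<Rightarrow> 'n) \<Rightarrow> bool" where
  "is_functor C D Fo Fm \<longleftrightarrow> category C \<and> category D \<and>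
     (\<forall>X\<in>Obj C. Fo X \<in> Obj D) \<and>
     (\<forall>f\<in>Mor C. Fm f \<in> hom D (Fo (Dom C f)) (Fo (Cod C f))) \<and>
     (\<forall>X\<in>Obj C. Fm (Idm C X) = Idm D (Fo X)) \<and>
     (\<forall>f g. f \<in> Mor C \<and> g \<in> Mor C \<and> Cod C f = Dom C g \<longrightarrow>
            Fm (Comp C g f) = Comp D (Fm g) (Fm f))"

definition is_iso :: "('o,'m,'x) cat_scheme \<Rightarrow> 'm \<Rightarrow> bool" where
  "is_iso C f \<longleftrightarrow> f \<in> Mor C \<and>
     (\<exists>g\<in>hom C (Cod C f) (Dom C f). Comp C g f = Idm C (Dom C f) \<and> Comp C f g = Idm C (Cod C f))"

definition nat_iso :: "('o,'m,'x) cat_scheme \<Rightarrow> ('p,'n,'y) cat_scheme \<Rightarrow>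
    ('o \<Rightarrow> 'p) \<Rightarrow> ('m \<Rightarrow> 'n) \<Rightarrow> ('o \<Rightarrow> 'p) \<Rightarrow> ('m \<Rightarrow> 'n) \<Rightarrow> ('o \<Rightarrow> 'n) \<Rightarrow> bool" where
  "nat_iso C D Fo Fm Go Gm \<eta> \<longleftrightarrow> is_functor C D Fo Fm \<and> is_functor C D Go Gm \<and>
     (\<forall>X\<in>Obj C. \<eta> X \<in> hom D (Fo X) (Go X) \<and> is_iso D (\<eta> X)) \<and>
     (\<forall>f\<in>Mor C. Comp D (\<eta> (Cod C f)) (Fm f) = Comp D (Gm f) (\<eta> (Dom C f)))"

definition equivalence :: "('o,'m,'x) cat_scheme \<Rightarrow> ('p,'n,'y) cat_scheme \<Rightarrow>
    ('o \<Rightarrow> 'p) \<Rightarrow> ('m \<Rightarrow> 'n) \<Rightarrow> bool" where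
  "equivalence C D Fo Fm \<longleftrightarrow> is_functor C D Fo Fm \<and>
     (\<exists>(Go :: 'p \<Rightarrow> 'o) (Gm :: 'n \<Rightarrow> 'm) \<eta> \<epsilon>. is_functor D C Go Gm \<and>
        nat_iso C C (\<lambda>X. X) (\<lambda>f. f) (Go \<circ> Fo) (Gm \<circ> Fm) \<eta> \<and>
        nat_iso D D (Fo \<circ> Go) (Fm \<circ> Gm) (\<lambda>X. X) (\<lambda>f. f) \<epsilon>)"

text \<open>\<open>\<omega>\<close> is modelled by \<open>nat\<close>; \<open>\<M>\<close> = injective functions \<open>nat \<Rightarrow> nat\<close>.
  \<open>act_ob u X = u\<^sub>*X\<close>; \<open>act_mor v u f : u\<^sub>*X \<rightarrow> v\<^sub>*Y\<close> for \<open>f : X \<rightarrow> Y\<close> is the action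
  functor \<open>E\<M> \<times> \<C> \<rightarrow> \<C>\<close> on the morphism \<open>(u \<rightarrow> v, f)\<close>; thus \<open>u\<^sub>* f = act_mor u u f\<close>
  and \<open>[v,u]\<^sub>X = act_mor v u (id X)\<close>.\<close>

record ('o,'m) pcat = "('o,'m) cat" +
  act_ob   :: "(nat \<Rightarrow> nat) \<Rightarrow> 'o \<Rightarrow> 'o"
  act_mor  :: "(nat \<Rightarrow> nat) \<Rightarrow> (nat \<Rightarrow> nat) \<Rightarrow> 'm \<Rightarrow> 'm"
  pzero    :: "'o"
  pplus_ob :: "'o \<Rightarrow> 'o \<Rightarrow> 'o"
  pplus_mor :: "'m \<Rightarrow> 'm \<Rightarrow> 'm"

definition EM_category :: "('o,'m,'x) pcat_scheme \<Rightarrow> bool" where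
  "EM_category C \<longleftrightarrow> category C \<and>
     (\<forall>u X. inj u \<and> X \<in> Obj C \<longrightarrow> act_ob C u X \<in> Obj C) \<and>
     (\<forall>u v f. inj u \<and> inj v \<and> f \<in> Mor C \<longrightarrow>
        act_mor C v u f \<in> hom C (act_ob C u (Dom C f)) (act_ob C v (Cod C f))) \<and>
     (\<forall>u X. inj u \<and> X \<in> Obj C \<longrightarrow> act_mor C u u (Idm C X) = Idm C (act_ob C u X)) \<and>
     (\<forall>u v w f g. inj u \<and> inj v \<and> inj w \<and> f \<in> Mor C \<and> g \<in> Mor C \<and> Cod C f = Dom C g \<longrightarrow>
        Comp C (act_mor C w v g) (act_mor C v u f) = act_mor C w u (Comp C g f)) \<and>
     (\<forall>X\<in>Obj C. act_ob C id X = X) \<and>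
     (\<forall>u v X. inj u \<and> inj v \<and> X \<in> Obj C \<longrightarrow> act_ob C v (act_ob C u X) = act_ob C (v \<circ> u) X) \<and>
     (\<forall>f\<in>Mor C. act_mor C id id f = f) \<and>
     (\<forall>u u' v v' f. inj u \<and> inj u' \<and> inj v \<and> inj v' \<and> f \<in> Mor C \<longrightarrow>
        act_mor C v' v (act_mor C u' u f) = act_mor C (v' \<circ> u') (v \<circ> u) f)"

definition supported_on :: "('o,'m,'x) pcat_scheme \<Rightarrow> 'o \<Rightarrow> nat set \<Rightarrow> bool" where
  "supported_on C X A \<longleftrightarrow> (\<forall>u. inj u \<and> (\<forall>a\<in>A. u a = a) \<longrightarrow> act_ob C u X = X)"

definition supp :: "('o,'m,'x) pcat_scheme \<Rightarrow> 'o \<Rightarrow> nat set" where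
  "supp C X = \<Inter>{A. finite A \<and> supported_on C X A}"

definition disj_ob :: "('o,'m,'x) pcat_scheme \<Rightarrow> 'o \<Rightarrow> 'o \<Rightarrow> bool" where
  "disj_ob C X Y \<longleftrightarrow> X \<in> Obj C \<and> Y \<in> Obj C \<and> supp C X \<inter> supp C Y = {}"

definition disj_mor :: "('o,'m,'x) pcat_scheme \<Rightarrow> 'm \<Rightarrow> 'm \<Rightarrow> bool" where
  "disj_mor C f g \<longleftrightarrow> f \<in> Mor C \<and> g \<in> Mor C \<and>
     disj_ob C (Dom C f) (Dom C g) \<and> disj_ob C (Cod C f) (Cod C g)"

definition parsummable :: "('o,'m,'x) pcat_scheme \<Rightarrow> bool" where
  "parsummable C \<longleftrightarrow> EM_category C \<and>
     (\<forall>X\<in>Obj C. \<exists>A. finite A \<and> supported_on C X A) \<and>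
     pzero C \<in> Obj C \<and> supp C (pzero C) = {} \<and>
     \<comment> \<open>\<open>+\<close> is a functor \<open>\<C> \<boxtimes> \<C> \<rightarrow> \<C>\<close>\<close>
     (\<forall>X Y. disj_ob C X Y \<longrightarrow> pplus_ob C X Y \<in> Obj C) \<and>
     (\<forall>f g. disj_mor C f g \<longrightarrow> pplus_mor C f g \<in>
        hom C (pplus_ob C (Dom C f) (Dom C g)) (pplus_ob C (Cod C f) (Cod C g))) \<and>
     (\<forall>X Y. disj_ob C X Y \<longrightarrow> pplus_mor C (Idm C X) (Idm C Y) = Idm C (pplus_ob C X Y)) \<and>
     (\<forall>f g f' g'. disj_mor C f g \<and> disj_mor C f' g' \<and> Cod C f = Dom C f' \<and> Cod C g = Dom C g' \<longrightarrow>
        pplus_mor C (Comp C f' f) (Comp C g' g) = Comp C (pplus_mor C f' g') (pplus_mor C f g)) \<and>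
     \<comment> \<open>strictly unital\<close>
     (\<forall>X\<in>Obj C. pplus_ob C X (pzero C) = X \<and> pplus_ob C (pzero C) X = X) \<and>
     (\<forall>f\<in>Mor C. pplus_mor C f (Idm C (pzero C)) = f \<and> pplus_mor C (Idm C (pzero C)) f = f) \<and>
     \<comment> \<open>associative\<close>
     (\<forall>X Y Z. disj_ob C X Y \<and> disj_ob C X Z \<and> disj_ob C Y Z \<longrightarrow>
        pplus_ob C (pplus_ob C X Y) Z = pplus_ob C X (pplus_ob C Y Z)) \<and>
     (\<forall>f g h. disj_mor C f g \<and> disj_mor C f h \<and> disj_mor C g h \<longrightarrow>
        pplus_mor C (pplus_mor C f g) h = pplus_mor C f (pplus_mor C g h)) \<and>
     \<comment> \<open>commutative\<close>
     (\<forall>X Y. disj_ob C X Y \<longrightarrow> pplus_ob C X Y = pplus_ob C Y X) \<and>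
     (\<forall>f g. disj_mor C f g \<longrightarrow> pplus_mor C f g = pplus_mor C g f) \<and>
     \<comment> \<open>\<open>E\<M>\<close>-equivariant\<close>
     (\<forall>u X Y. inj u \<and> disj_ob C X Y \<longrightarrow>
        act_ob C u (pplus_ob C X Y) = pplus_ob C (act_ob C u X) (act_ob C u Y)) \<and>
     (\<forall>u v f g. inj u \<and> inj v \<and> disj_mor C f g \<longrightarrow>
        act_mor C v u (pplus_mor C f g) = pplus_mor C (act_mor C v u f) (act_mor C v u g))"

definition pmorph :: "('o,'m,'x) pcat_scheme \<Rightarrow> ('p,'n,'y) pcat_scheme \<Rightarrow>
    ('o \<Rightarrow> 'p) \<Rightarrow> ('m \<Rightarrow> 'n) \<Rightarrow> bool" where
  "pmorph C D Fo Fm \<longleftrightarrow> parsummable C \<and> parsummable D \<and> is_functor C D Fo Fm \<and>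
     (\<forall>u X. inj u \<and> X \<in> Obj C \<longrightarrow> Fo (act_ob C u X) = act_ob D u (Fo X)) \<and>
     (\<forall>u v f. inj u \<and> inj v \<and> f \<in> Mor C \<longrightarrow> Fm (act_mor C v u f) = act_mor D v u (Fm f)) \<and>
     Fo (pzero C) = pzero D \<and>
     (\<forall>X Y. disj_ob C X Y \<longrightarrow> Fo (pplus_ob C X Y) = pplus_ob D (Fo X) (Fo Y)) \<and>
     (\<forall>f g. disj_mor C f g \<longrightarrow> Fm (pplus_mor C f g) = pplus_mor D (Fm f) (Fm g))"

text \<open>Sum-preserving functors of underlying categories (functoriality is stated separately).\<close>
definition preserves_sums :: "('o,'m,'x) pcat_scheme \<Rightarrow> ('p,'n,'y) pcat_scheme \<Rightarrow>
    ('o \<Rightarrow> 'p) \<Rightarrow> ('m \<Rightarrow> 'n) \<Rightarrow> bool" where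
  "preserves_sums C D Fo Fm \<longleftrightarrow>
     Fo (pzero C) = pzero D \<and>
     (\<forall>X Y. disj_ob C X Y \<longrightarrow> disj_ob D (Fo X) (Fo Y)) \<and>
     (\<forall>X Y. disj_ob C X Y \<longrightarrow> Fo (pplus_ob C X Y) = pplus_ob D (Fo X) (Fo Y)) \<and>
     (\<forall>f g. disj_mor C f g \<longrightarrow> Fm (pplus_mor C f g) = pplus_mor D (Fm f) (Fm g))"

definition prod_pcat :: "('o,'m,'x) pcat_scheme \<Rightarrow> ('p,'n,'y) pcat_scheme \<Rightarrow> ('o \<times> 'p, 'm \<times> 'n) pcat" where
  "prod_pcat C D = \<lparr>
     Obj = Obj C \<times> Obj D,
     Mor = Mor C \<times> Mor D,
     Dom = (\<lambda>(f,g). (Dom C f, Dom D g)),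
     Cod = (\<lambda>(f,g). (Cod C f, Cod D g)),
     Idm = (\<lambda>(X,Y). (Idm C X, Idm D Y)),
     Comp = (\<lambda>(f',g') (f,g). (Comp C f' f, Comp D g' g)),
     act_ob = (\<lambda>u (X,Y). (act_ob C u X, act_ob D u Y)),
     act_mor = (\<lambda>v u (f,g). (act_mor C v u f, act_mor D v u g)),
     pzero = (pzero C, pzero D),
     pplus_ob = (\<lambda>(X,Y) (X',Y'). (pplus_ob C X X', pplus_ob D Y Y')),
     pplus_mor = (\<lambda>(f,g) (f',g'). (pplus_mor C f f', pplus_mor D g g')) \<rparr>"

text \<open>The parsummable category \<open>G\<^sub>*\<C>\<close>; a morphism \<open>X \<rightarrow> Y\<close> is a triple \<open>(X, Y, d)\<close>
  with \<open>d \<in> Hom\<^sub>\<D>(GX, GY)\<close>. The action on morphisms is \<open>(v\<^sub>\<circ>\<^sup>Y) \<circ> d \<circ> (u\<^sub>\<circ>\<^sup>X)\<^sup>-\<^sup>1\<close>,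
  expressed with the structure isomorphisms \<open>G(u\<^sub>\<circ>\<^sup>X) = G([u,1]\<^sub>X)\<close> and their inverses
  \<open>G([1,u]\<^sub>X)\<close>.\<close>
definition push_pcat :: "('o,'m,'x) pcat_scheme \<Rightarrow> ('p,'n,'y) pcat_scheme \<Rightarrow>
    ('o \<Rightarrow> 'p) \<Rightarrow> ('m \<Rightarrow> 'n) \<Rightarrow> ('o, 'o \<times> 'o \<times> 'n) pcat" where
  "push_pcat C D Go Gm = \<lparr>
     Obj = Obj C,
     Mor = {(X, Y, d). X \<in> Obj C \<and> Y \<in> Obj C \<and> d \<in> hom D (Go X) (Go Y)},
     Dom = (\<lambda>(X, Y, d). X),
     Cod = (\<lambda>(X, Y, d). Y),
     Idm = (\<lambda>X. (X, X, Idm D (Go X))),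
     Comp = (\<lambda>(Y', Z, e) (X, Y, d). (X, Z, Comp D e d)),
     act_ob = act_ob C,
     act_mor = (\<lambda>v u (X, Y, d). (act_ob C u X, act_ob C v Y,
        Comp D (Gm (act_mor C v id (Idm C Y))) (Comp D d (Gm (act_mor C id u (Idm C X)))))),
     pzero = pzero C,
     pplus_ob = pplus_ob C,
     pplus_mor = (\<lambda>(X, Y, d) (X', Y', d'). (pplus_ob C X X', pplus_ob C Y Y', pplus_mor D d d')) \<rparr>"

text \<open>The functor \<open>I : \<C> \<rightarrow> G\<^sub>*\<C>\<close> on morphisms (identity on objects).\<close>
definition push_I :: "('o,'m,'x) pcat_scheme \<Rightarrow> ('m \<Rightarrow> 'n) \<Rightarrow> 'm \<Rightarrow> 'o \<times> 'o \<times> 'n" where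
  "push_I C Gm f = (Dom C f, Cod C f, Gm f)"

text \<open>\<open>\<mu> : 2 \<times> \<omega> \<rightarrow> \<omega>\<close> with \<open>2 = {0,1}\<close>; \<open>\<mu>\<^sub>* (X, Y) = \<mu>(0,-)\<^sub>*X + \<mu>(1,-)\<^sub>*Y\<close>.\<close>
definition mu_ob :: "('p,'n,'y) pcat_scheme \<Rightarrow> (nat \<times> nat \<Rightarrow> nat) \<Rightarrow> 'p \<times> 'p \<Rightarrow> 'p" where
  "mu_ob D mu = (\<lambda>(X, Y). pplus_ob D (act_ob D (\<lambda>n. mu (0, n)) X) (act_ob D (\<lambda>n. mu (1, n)) Y))"

definition mu_mor :: "('p,'n,'y) pcat_scheme \<Rightarrow> (nat \<times> nat \<Rightarrow> nat) \<Rightarrow> 'n \<times> 'n \<Rightarrow> 'n" where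
  "mu_mor D mu = (\<lambda>(f, g). pplus_mor D (act_mor D (\<lambda>n. mu (0, n)) (\<lambda>n. mu (0, n)) f)
                                       (act_mor D (\<lambda>n. mu (1, n)) (\<lambda>n. mu (1, n)) g))"

definition Fmu_ob :: "('p,'n,'y) pcat_scheme \<Rightarrow> (nat \<times> nat \<Rightarrow> nat) \<Rightarrow> ('o \<Rightarrow> 'p) \<Rightarrow> 'o \<times> 'p \<Rightarrow> 'p" where
  "Fmu_ob D mu Fo = (\<lambda>(X, Y). mu_ob D mu (Fo X, Y))"

definition Fmu_mor :: "('p,'n,'y) pcat_scheme \<Rightarrow> (nat \<times> nat \<Rightarrow> nat) \<Rightarrow> ('m \<Rightarrow> 'n) \<Rightarrow> 'm \<times> 'n \<Rightarrow> 'n" where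
  "Fmu_mor D mu Fm = (\<lambda>(f, g). mu_mor D mu (Fm f, g))"

definition Cyl :: "('o,'m,'x) pcat_scheme \<Rightarrow> ('p,'n,'y) pcat_scheme \<Rightarrow> (nat \<times> nat \<Rightarrow> nat) \<Rightarrow>
    ('o \<Rightarrow> 'p) \<Rightarrow> ('m \<Rightarrow> 'n) \<Rightarrow> ('o \<times> 'p, ('o \<times> 'p) \<times> ('o \<times> 'p) \<times> 'n) pcat" where
  "Cyl C D mu Fo Fm = push_pcat (prod_pcat C D) D (Fmu_ob D mu Fo) (Fmu_mor D mu Fm)"

definition I1_ob :: "('p,'n,'y) pcat_scheme \<Rightarrow> 'o \<Rightarrow> 'o \<times> 'p" where
  "I1_ob D X = (X, pzero D)"

definition I1_mor :: "('o,'m,'x) pcat_scheme \<Rightarrow> ('p,'n,'y) pcat_scheme \<Rightarrow> (nat \<times> nat \<Rightarrow> nat) \<Rightarrow>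
    ('m \<Rightarrow> 'n) \<Rightarrow> 'm \<Rightarrow> ('o \<times> 'p) \<times> ('o \<times> 'p) \<times> 'n" where
  "I1_mor C D mu Fm f = push_I (prod_pcat C D) (Fmu_mor D mu Fm) (f, Idm D (pzero D))"

definition I2_ob :: "('o,'m,'x) pcat_scheme \<Rightarrow> 'p \<Rightarrow> 'o \<times> 'p" where
  "I2_ob C Y = (pzero C, Y)"

definition I2_mor :: "('o,'m,'x) pcat_scheme \<Rightarrow> ('p,'n,'y) pcat_scheme \<Rightarrow> (nat \<times> nat \<Rightarrow> nat) \<Rightarrow>
    ('m \<Rightarrow> 'n) \<Rightarrow> 'n \<Rightarrow> ('o \<times> 'p) \<times> ('o \<times> 'p) \<times> 'n" where
  "I2_mor C D mu Fm g = push_I (prod_pcat C D) (Fmu_mor D mu Fm) (Idm C (pzero C), g)"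

end

theory Submission
  imports Defs "HOL-Library.Countable_Set"
begin


lemma catD:
  assumes "category C"
  shows cat_dom: "f \<in> Mor C \<Longrightarrow> Dom C f \<in> Obj C"
    and cat_cod: "f \<in> Mor C \<Longrightarrow> Cod C f \<in> Obj C"
    and cat_id_mor: "X \<in> Obj C \<Longrightarrow> Idm C X \<in> Mor C"
    and cat_id_dom: "X \<in> Obj C \<Longrightarrow> Dom C (Idm C X) = X"
    and cat_id_cod: "X \<in> Obj C \<Longrightarrow> Cod C (Idm C X) = X"
    and cat_comp_mor: "f \<in> Mor C \<Longrightarrow> g \<in> Mor C \<Longrightarrow> Cod C f = Dom C g \<Longrightarrow> Comp C g f \<in> Mor C"
    and cat_comp_dom: "f \<in> Mor C \<Longrightarrow> g \<in> Mor C \<Longrightarrow> Cod C f = Dom C g \<Longrightarrow> Dom C (Comp C g f) = Dom C f"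
    and cat_comp_cod: "f \<in> Mor C \<Longrightarrow> g \<in> Mor C \<Longrightarrow> Cod C f = Dom C g \<Longrightarrow> Cod C (Comp C g f) = Cod C g"
    and cat_idl: "f \<in> Mor C \<Longrightarrow> Comp C (Idm C (Cod C f)) f = f"
    and cat_idr: "f \<in> Mor C \<Longrightarrow> Comp C f (Idm C (Dom C f)) = f"
    and cat_assoc: "f \<in> Mor C \<Longrightarrow> g \<in> Mor C \<Longrightarrow> h \<in> Mor C \<Longrightarrow> Cod C f = Dom C g \<Longrightarrow> Cod C g = Dom C h
            \<Longrightarrow> Comp C h (Comp C g f) = Comp C (Comp C h g) f"
  using assms unfolding category_def hom_def by blast+

lemma ext_bij:
  fixes h :: "nat \<Rightarrow> nat"
  assumes "finite K" "inj_on h K"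
  shows "\<exists>\<sigma>. bij \<sigma> \<and> (\<forall>k\<in>K. \<sigma> k = h k)"
proof -
  have i1: "infinite (- K)" using assms(1) by (metis finite_compl infinite_UNIV_nat)
  have i2: "infinite (- (h ` K))" using assms(1) by (metis finite_compl finite_imageI infinite_UNIV_nat)
  obtain e1 :: "nat \<Rightarrow> nat" where e1: "bij_betw e1 (- K) UNIV"
    using countableE_infinite[OF _ i1] by blast
  obtain e2 :: "nat \<Rightarrow> nat" where e2: "bij_betw e2 (- (h ` K)) UNIV"
    using countableE_infinite[OF _ i2] by blast
  define g where "g = inv_into (- (h ` K)) e2 \<circ> e1"
  have g: "bij_betw g (- K) (- (h ` K))"
    unfolding g_def by (rule bij_betw_trans[OF e1 bij_betw_inv_into[OF e2]])
  define \<sigma> where "\<sigma> = (\<lambda>n. if n \<in> K then h n else g n)"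
  have b1: "bij_betw \<sigma> K (h ` K)"
    using assms(2) unfolding \<sigma>_def by (simp add: bij_betw_def inj_on_def image_def)
  have b2: "bij_betw \<sigma> (- K) (- (h ` K))"
    using g by (rule bij_betw_cong[THEN iffD1, rotated]) (simp add: \<sigma>_def)
  have "bij_betw \<sigma> (K \<union> - K) (h ` K \<union> - (h ` K))"
    by (rule bij_betw_combine[OF b1 b2]) blast
  then have "bij \<sigma>" by simp
  then show ?thesis unfolding \<sigma>_def by auto
qed

locale psum =
  fixes C :: "('o,'m,'x) pcat_scheme"
  assumes ps: "parsummable C"
begin

lemmas psx = ps[unfolded parsummable_def]
lemma EM: "EM_category C" using psx[THEN conjunct1] by blast
lemmas EMx = EM[unfolded EM_category_def]
lemma cat: "category C" using EMx[THEN conjunct1] by blast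

lemmas c_dom = cat_dom[OF cat] and c_cod = cat_cod[OF cat] and c_id_mor = cat_id_mor[OF cat]
  and c_id_dom = cat_id_dom[OF cat] and c_id_cod = cat_id_cod[OF cat]
  and c_comp_mor = cat_comp_mor[OF cat] and c_comp_dom = cat_comp_dom[OF cat]
  and c_comp_cod = cat_comp_cod[OF cat] and c_idl = cat_idl[OF cat] and c_idr = cat_idr[OF cat]
  and c_assoc = cat_assoc[OF cat]

lemma act_ob_Obj: "inj u \<Longrightarrow> X \<in> Obj C \<Longrightarrow> act_ob C u X \<in> Obj C"
  using EMx[THEN conjunct2, THEN conjunct1] by blast
lemma act_mor_hom: "inj u \<Longrightarrow> inj v \<Longrightarrow> f \<in> Mor C \<Longrightarrow>
   act_mor C v u f \<in> Mor C \<and> Dom C (act_mor C v u f) = act_ob C u (Dom C f) \<and> Cod C (act_mor C v u f) = act_ob C v (Cod C f)"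
  using EMx[THEN conjunct2, THEN conjunct2, THEN conjunct1] unfolding hom_def by blast
lemma act_mor_Mor: "inj u \<Longrightarrow> inj v \<Longrightarrow> f \<in> Mor C \<Longrightarrow> act_mor C v u f \<in> Mor C"
  using act_mor_hom by blast
lemma act_mor_Dom: "inj u \<Longrightarrow> inj v \<Longrightarrow> f \<in> Mor C \<Longrightarrow> Dom C (act_mor C v u f) = act_ob C u (Dom C f)"
  using act_mor_hom by blast
lemma act_mor_Cod: "inj u \<Longrightarrow> inj v \<Longrightarrow> f \<in> Mor C \<Longrightarrow> Cod C (act_mor C v u f) = act_ob C v (Cod C f)"
  using act_mor_hom by blast
lemma act_mor_Idm: "inj u \<Longrightarrow> X \<in> Obj C \<Longrightarrow> act_mor C u u (Idm C X) = Idm C (act_ob C u X)"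
  using EMx[THEN conjunct2, THEN conjunct2, THEN conjunct2, THEN conjunct1] by blast
lemma act_mor_comp: "inj u \<Longrightarrow> inj v \<Longrightarrow> inj w \<Longrightarrow> f \<in> Mor C \<Longrightarrow> g \<in> Mor C \<Longrightarrow> Cod C f = Dom C g \<Longrightarrow>
        Comp C (act_mor C w v g) (act_mor C v u f) = act_mor C w u (Comp C g f)"
  using EMx[THEN conjunct2, THEN conjunct2, THEN conjunct2, THEN conjunct2, THEN conjunct1] by blast
lemma act_ob_id: "X \<in> Obj C \<Longrightarrow> act_ob C id X = X"
  using EMx[THEN conjunct2, THEN conjunct2, THEN conjunct2, THEN conjunct2, THEN conjunct2, THEN conjunct1] by blast
lemma act_ob_comp: "inj u \<Longrightarrow> inj v \<Longrightarrow> X \<in> Obj C \<Longrightarrow> act_ob C v (act_ob C u X) = act_ob C (v \<circ> u) X"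
  using EMx[THEN conjunct2, THEN conjunct2, THEN conjunct2, THEN conjunct2, THEN conjunct2, THEN conjunct2, THEN conjunct1] by blast
lemma act_mor_id: "f \<in> Mor C \<Longrightarrow> act_mor C id id f = f"
  using EMx[THEN conjunct2, THEN conjunct2, THEN conjunct2, THEN conjunct2, THEN conjunct2, THEN conjunct2, THEN conjunct2, THEN conjunct1] by blast
lemma act_mor_act_mor: "inj u \<Longrightarrow> inj u' \<Longrightarrow> inj v \<Longrightarrow> inj v' \<Longrightarrow> f \<in> Mor C \<Longrightarrow>
        act_mor C v' v (act_mor C u' u f) = act_mor C (v' \<circ> u') (v \<circ> u) f"
  using EMx[THEN conjunct2, THEN conjunct2, THEN conjunct2, THEN conjunct2, THEN conjunct2, THEN conjunct2, THEN conjunct2, THEN conjunct2] by blast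

lemma fin_supp: "X \<in> Obj C \<Longrightarrow> \<exists>A. finite A \<and> supported_on C X A"
  using psx[THEN conjunct2, THEN conjunct1] by blast
lemma zero_Obj: "pzero C \<in> Obj C" using psx[THEN conjunct2, THEN conjunct2, THEN conjunct1] by blast
lemma supp_zero: "supp C (pzero C) = {}" using psx[THEN conjunct2, THEN conjunct2, THEN conjunct2, THEN conjunct1] by blast
lemma plus_Obj: "disj_ob C X Y \<Longrightarrow> pplus_ob C X Y \<in> Obj C"
  using psx[THEN conjunct2, THEN conjunct2, THEN conjunct2, THEN conjunct2, THEN conjunct1] by blast
lemma plus_hom: "disj_mor C f g \<Longrightarrow> pplus_mor C f g \<in> Mor C \<and>
   Dom C (pplus_mor C f g) = pplus_ob C (Dom C f) (Dom C g) \<and> Cod C (pplus_mor C f g) = pplus_ob C (Cod C f) (Cod C g)"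
  using psx[THEN conjunct2, THEN conjunct2, THEN conjunct2, THEN conjunct2, THEN conjunct2, THEN conjunct1] unfolding hom_def by blast
lemma plus_Idm: "disj_ob C X Y \<Longrightarrow> pplus_mor C (Idm C X) (Idm C Y) = Idm C (pplus_ob C X Y)"
  using psx[THEN conjunct2, THEN conjunct2, THEN conjunct2, THEN conjunct2, THEN conjunct2, THEN conjunct2, THEN conjunct1] by blast
lemma plus_interchange: "disj_mor C f g \<Longrightarrow> disj_mor C f' g' \<Longrightarrow> Cod C f = Dom C f' \<Longrightarrow> Cod C g = Dom C g' \<Longrightarrow>
        pplus_mor C (Comp C f' f) (Comp C g' g) = Comp C (pplus_mor C f' g') (pplus_mor C f g)"
  using psx[THEN conjunct2, THEN conjunct2, THEN conjunct2, THEN conjunct2, THEN conjunct2, THEN conjunct2, THEN conjunct2, THEN conjunct1] by blast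
lemma unit_ob: "X \<in> Obj C \<Longrightarrow> pplus_ob C X (pzero C) = X \<and> pplus_ob C (pzero C) X = X"
  using psx[THEN conjunct2, THEN conjunct2, THEN conjunct2, THEN conjunct2, THEN conjunct2, THEN conjunct2, THEN conjunct2, THEN conjunct2, THEN conjunct1] by blast
lemma unit_mor: "f \<in> Mor C \<Longrightarrow> pplus_mor C f (Idm C (pzero C)) = f \<and> pplus_mor C (Idm C (pzero C)) f = f"
  using psx[THEN conjunct2, THEN conjunct2, THEN conjunct2, THEN conjunct2, THEN conjunct2, THEN conjunct2, THEN conjunct2, THEN conjunct2, THEN conjunct2, THEN conjunct1] by blast
lemma assoc_ob: "disj_ob C X Y \<Longrightarrow> disj_ob C X Z \<Longrightarrow> disj_ob C Y Z \<Longrightarrow>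
        pplus_ob C (pplus_ob C X Y) Z = pplus_ob C X (pplus_ob C Y Z)"
  using psx[THEN conjunct2, THEN conjunct2, THEN conjunct2, THEN conjunct2, THEN conjunct2, THEN conjunct2, THEN conjunct2, THEN conjunct2, THEN conjunct2, THEN conjunct2, THEN conjunct1] by blast
lemma assoc_mor: "disj_mor C f g \<Longrightarrow> disj_mor C f h \<Longrightarrow> disj_mor C g h \<Longrightarrow>
        pplus_mor C (pplus_mor C f g) h = pplus_mor C f (pplus_mor C g h)"
  using psx[THEN conjunct2, THEN conjunct2, THEN conjunct2, THEN conjunct2, THEN conjunct2, THEN conjunct2, THEN conjunct2, THEN conjunct2, THEN conjunct2, THEN conjunct2, THEN conjunct2, THEN conjunct1] by blast
lemma comm_ob: "disj_ob C X Y \<Longrightarrow> pplus_ob C X Y = pplus_ob C Y X"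
  using psx[THEN conjunct2, THEN conjunct2, THEN conjunct2, THEN conjunct2, THEN conjunct2, THEN conjunct2, THEN conjunct2, THEN conjunct2, THEN conjunct2, THEN conjunct2, THEN conjunct2, THEN conjunct2, THEN conjunct1] by blast
lemma comm_mor: "disj_mor C f g \<Longrightarrow> pplus_mor C f g = pplus_mor C g f"
  using psx[THEN conjunct2, THEN conjunct2, THEN conjunct2, THEN conjunct2, THEN conjunct2, THEN conjunct2, THEN conjunct2, THEN conjunct2, THEN conjunct2, THEN conjunct2, THEN conjunct2, THEN conjunct2, THEN conjunct2, THEN conjunct1] by blast
lemma eq_ob: "inj u \<Longrightarrow> disj_ob C X Y \<Longrightarrow>
        act_ob C u (pplus_ob C X Y) = pplus_ob C (act_ob C u X) (act_ob C u Y)"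
  using psx[THEN conjunct2, THEN conjunct2, THEN conjunct2, THEN conjunct2, THEN conjunct2, THEN conjunct2, THEN conjunct2, THEN conjunct2, THEN conjunct2, THEN conjunct2, THEN conjunct2, THEN conjunct2, THEN conjunct2, THEN conjunct2, THEN conjunct1] by blast
lemma eq_mor: "inj u \<Longrightarrow> inj v \<Longrightarrow> disj_mor C f g \<Longrightarrow>
        act_mor C v u (pplus_mor C f g) = pplus_mor C (act_mor C v u f) (act_mor C v u g)"
  using psx[THEN conjunct2, THEN conjunct2, THEN conjunct2, THEN conjunct2, THEN conjunct2, THEN conjunct2, THEN conjunct2, THEN conjunct2, THEN conjunct2, THEN conjunct2, THEN conjunct2, THEN conjunct2, THEN conjunct2, THEN conjunct2, THEN conjunct2] by blast

section \<open>Supports\<close>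

lemma supported_mono: "supported_on C X A \<Longrightarrow> A \<subseteq> B \<Longrightarrow> supported_on C X B"
  unfolding supported_on_def by blast

lemma agree:
  assumes X: "X \<in> Obj C" and A: "finite A" "supported_on C X A"
    and u: "inj u" and v: "inj v" and uv: "\<forall>a\<in>A. u a = v a"
  shows "act_ob C u X = act_ob C v X"
proof -
  have key: "act_ob C u X = act_ob C \<sigma> X" if "inj u" "bij \<sigma>" "\<forall>a\<in>A. \<sigma> a = u a" for u \<sigma>
  proof -
    define w where "w = inv \<sigma> \<circ> u"
    have iw: "inj w" unfolding w_def using that by (simp add: bij_imp_bij_inv bij_is_inj inj_compose)
    have "\<forall>a\<in>A. w a = a" unfolding w_def using that by (metis bij_inv_eq_iff comp_apply)
    then have "act_ob C w X = X" using A(2) iw unfolding supported_on_def by blast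
    moreover have "\<sigma> \<circ> w = u" unfolding w_def using that(2) by (auto simp: bij_is_surj surj_f_inv_f)
    ultimately show ?thesis using act_ob_comp[OF iw bij_is_inj[OF that(2)] X] by simp
  qed
  obtain \<sigma> where s: "bij \<sigma>" "\<forall>a\<in>A. \<sigma> a = u a"
    using ext_bij[OF A(1), of u] u by (auto intro: inj_on_subset)
  have "act_ob C u X = act_ob C \<sigma> X" using key[OF u s] .
  also have "\<dots> = act_ob C v X" using key[OF v s(1)] s(2) uv by simp
  finally show ?thesis .
qed

lemma supported_act:
  assumes X: "X \<in> Obj C" and A: "finite A" "supported_on C X A" and u: "inj u"
  shows "supported_on C (act_ob C u X) (u ` A)"
  unfolding supported_on_def
proof (intro allI impI)
  fix w assume w: "inj w \<and> (\<forall>a\<in>u ` A. w a = a)"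
  have "act_ob C w (act_ob C u X) = act_ob C (w \<circ> u) X" using act_ob_comp u w X by blast
  also have "\<dots> = act_ob C u X"
    by (rule agree[OF X A]) (use w u in \<open>auto intro: inj_compose\<close>)
  finally show "act_ob C w (act_ob C u X) = act_ob C u X" .
qed

lemma supported_Int:
  assumes X: "X \<in> Obj C" and A: "finite A" "supported_on C X A" and B: "finite B" "supported_on C X B"
  shows "supported_on C X (A \<inter> B)"
  unfolding supported_on_def
proof (intro allI impI)
  fix u assume u: "inj u \<and> (\<forall>a\<in>A \<inter> B. u a = a)"
  define M where "M = Suc (Max (A \<union> B \<union> u ` A))"
  have fin: "finite (A \<union> B \<union> u ` A)" using A B by blast
  have lt: "n < M" if "n \<in> A \<union> B \<union> u ` A" for n unfolding M_def using Max_ge[OF fin that] by simp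
  define h1 where "h1 = (\<lambda>n. if n \<in> A then u n else n + M)"
  define h2 where "h2 = (\<lambda>n. if n \<in> A then n else n + M)"
  have "inj_on h1 (A \<union> B)"
  proof (rule inj_onI)
    fix x y assume xy: "x \<in> A \<union> B" "y \<in> A \<union> B" "h1 x = h1 y"
    have "u x < M" if "x \<in> A" using lt that by blast
    moreover have "u y < M" if "y \<in> A" using lt that by blast
    ultimately show "x = y" using xy u unfolding h1_def
      by (cases "x \<in> A"; cases "y \<in> A") (auto simp: inj_eq)
  qed
  then obtain s1 where s1: "bij s1" "\<forall>k\<in>A \<union> B. s1 k = h1 k" using ext_bij A B by (metis finite_Un)
  have "inj_on h2 (A \<union> B)"
  proof (rule inj_onI)
    fix x y assume xy: "x \<in> A \<union> B" "y \<in> A \<union> B" "h2 x = h2 y"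
    have "x < M" if "x \<in> A" using lt that by blast
    moreover have "y < M" if "y \<in> A" using lt that by blast
    ultimately show "x = y" using xy unfolding h2_def
      by (cases "x \<in> A"; cases "y \<in> A") auto
  qed
  then obtain s2 where s2: "bij s2" "\<forall>k\<in>A \<union> B. s2 k = h2 k" using ext_bij A B by (metis finite_Un)
  have "act_ob C u X = act_ob C s1 X"
    by (rule agree[OF X A]) (use u s1 in \<open>auto simp: h1_def bij_is_inj\<close>)
  also have "\<dots> = act_ob C s2 X"
    by (rule agree[OF X B]) (use u s1 s2 in \<open>auto simp: h1_def h2_def bij_is_inj\<close>)
  also have "\<dots> = act_ob C id X"
    by (rule agree[OF X A]) (use s2 in \<open>auto simp: h2_def bij_is_inj\<close>)
  finally show "act_ob C u X = X" using act_ob_id X by simp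
qed

lemma supp_subset: "finite A \<Longrightarrow> supported_on C X A \<Longrightarrow> supp C X \<subseteq> A"
  unfolding supp_def by (rule Inter_lower) simp

lemma not_in_supp: "X \<in> Obj C \<Longrightarrow> x \<notin> supp C X \<Longrightarrow> \<exists>A. finite A \<and> supported_on C X A \<and> x \<notin> A"
  unfolding supp_def by auto

lemma supp_act: assumes X: "X \<in> Obj C" and u: "inj u" shows "supp C (act_ob C u X) \<subseteq> u ` supp C X"
proof
  fix x assume x: "x \<in> supp C (act_ob C u X)"
  have ex: "\<exists>A. finite A \<and> supported_on C X A \<and> x \<notin> u ` A" if nx: "x \<notin> u ` supp C X"
  proof (cases "x \<in> range u")
    case True
    then obtain y where y: "x = u y" by blast
    with nx have "y \<notin> supp C X" by blast
    then obtain A where A: "finite A" "supported_on C X A" "y \<notin> A" using not_in_supp[OF X] by blast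
    have "x \<notin> u ` A"
    proof
      assume "x \<in> u ` A"
      then obtain z where "z \<in> A" "u y = u z" using y by (metis imageE)
      then show False using A(3) u by (metis injD)
    qed
    then show ?thesis using A by blast
  next
    case False
    obtain A0 where A0: "finite A0" "supported_on C X A0" using fin_supp[OF X] by blast
    have "x \<notin> u ` A0" using False by blast
    then show ?thesis using A0 by blast
  qed
  show "x \<in> u ` supp C X"
  proof (rule ccontr)
    assume nx: "x \<notin> u ` supp C X"
    obtain A where A: "finite A" "supported_on C X A" "x \<notin> u ` A" using ex[OF nx] by blast
    have "supp C (act_ob C u X) \<subseteq> u ` A"
      by (rule supp_subset) (use supported_act[OF X A(1,2) u] A(1) in auto)
    then show False using x A(3) by blast
  qed
qed

lemma supp_plus: assumes d: "disj_ob C X Y" shows "supp C (pplus_ob C X Y) \<subseteq> supp C X \<union> supp C Y"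
proof
  fix x assume x: "x \<in> supp C (pplus_ob C X Y)"
  show "x \<in> supp C X \<union> supp C Y"
  proof (rule ccontr)
    assume "x \<notin> supp C X \<union> supp C Y"
    then obtain A B where A: "finite A" "supported_on C X A" "x \<notin> A"
      and B: "finite B" "supported_on C Y B" "x \<notin> B"
      using not_in_supp d unfolding disj_ob_def by (metis UnCI)
    have "supported_on C (pplus_ob C X Y) (A \<union> B)"
      unfolding supported_on_def
    proof (intro allI impI)
      fix w assume w: "inj w \<and> (\<forall>a\<in>A \<union> B. w a = a)"
      have "act_ob C w X = X" "act_ob C w Y = Y" using w A B unfolding supported_on_def by auto
      then show "act_ob C w (pplus_ob C X Y) = pplus_ob C X Y" using eq_ob w d by auto
    qed
    then have "supp C (pplus_ob C X Y) \<subseteq> A \<union> B" using supp_subset A B by blast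
    then show False using x A B by blast
  qed
qed

lemma zero_supported_empty: "supported_on C (pzero C) {}"
proof -
  obtain A0 where A0: "finite A0" "supported_on C (pzero C) A0" using fin_supp zero_Obj by blast
  have "\<forall>K. K \<subseteq> A0 \<longrightarrow> supported_on C (pzero C) (A0 - K)"
  proof (intro allI impI)
    fix K assume "K \<subseteq> A0"
    then have "finite K" using A0 finite_subset by blast
    then show "supported_on C (pzero C) (A0 - K)" using \<open>K \<subseteq> A0\<close>
    proof (induction K rule: finite_induct)
      case empty then show ?case using A0 by simp
    next
      case (insert a K)
      then have s: "supported_on C (pzero C) (A0 - K)" by blast
      obtain B where B: "finite B" "supported_on C (pzero C) B" "a \<notin> B"
        using not_in_supp[OF zero_Obj] supp_zero by blast
      have "supported_on C (pzero C) ((A0 - K) \<inter> B)"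
        using supported_Int[OF zero_Obj _ s B(1,2)] A0 by blast
      then show ?case by (rule supported_mono) (use B in auto)
    qed
  qed
  then show ?thesis by (metis Diff_cancel order_refl)
qed

lemma act_zero: "inj u \<Longrightarrow> act_ob C u (pzero C) = pzero C"
  using zero_supported_empty unfolding supported_on_def by blast

lemma disj_ob_zero: "X \<in> Obj C \<Longrightarrow> disj_ob C X (pzero C)"
  unfolding disj_ob_def using zero_Obj supp_zero by simp

lemma disj_ob_zero2: "X \<in> Obj C \<Longrightarrow> disj_ob C (pzero C) X"
  unfolding disj_ob_def using zero_Obj supp_zero by simp


section \<open>Structure isomorphisms of zero are trivial\<close>

lemma zero_act_id: "act_ob C id (pzero C) = pzero C" using act_ob_id zero_Obj by blast

lemma e_Mor: "inj w \<Longrightarrow> act_mor C w id (Idm C (pzero C)) \<in> Mor C \<and>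
   Dom C (act_mor C w id (Idm C (pzero C))) = pzero C \<and> Cod C (act_mor C w id (Idm C (pzero C))) = pzero C"
  using act_mor_hom[of id w "Idm C (pzero C)"] c_id_mor c_id_dom c_id_cod zero_Obj act_zero zero_act_id by auto

lemma e'_Mor: "inj w \<Longrightarrow> act_mor C id w (Idm C (pzero C)) \<in> Mor C \<and>
   Dom C (act_mor C id w (Idm C (pzero C))) = pzero C \<and> Cod C (act_mor C id w (Idm C (pzero C))) = pzero C"
  using act_mor_hom[of w id "Idm C (pzero C)"] c_id_mor c_id_dom c_id_cod zero_Obj act_zero zero_act_id by auto

lemma II: "Comp C (Idm C (pzero C)) (Idm C (pzero C)) = Idm C (pzero C)"
  using c_idl[OF c_id_mor[OF zero_Obj]] c_id_cod[OF zero_Obj] by simp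

lemma e_inv1: "inj w \<Longrightarrow> Comp C (act_mor C id w (Idm C (pzero C))) (act_mor C w id (Idm C (pzero C))) = Idm C (pzero C)"
  using act_mor_comp[of id w id "Idm C (pzero C)" "Idm C (pzero C)"] c_id_mor[OF zero_Obj] II
    c_id_dom[OF zero_Obj] c_id_cod[OF zero_Obj]
    act_mor_id[OF c_id_mor[OF zero_Obj]] by simp

lemma e_inv2: "inj w \<Longrightarrow> Comp C (act_mor C w id (Idm C (pzero C))) (act_mor C id w (Idm C (pzero C))) = Idm C (pzero C)"
  using act_mor_comp[of w id w "Idm C (pzero C)" "Idm C (pzero C)"] c_id_mor[OF zero_Obj] II
    c_id_dom[OF zero_Obj] c_id_cod[OF zero_Obj]
    act_mor_Idm[OF _ zero_Obj, of w] act_zero by simp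

lemma e_hom:
  assumes w: "inj w" and w': "inj w'"
  shows "act_mor C (w \<circ> w') id (Idm C (pzero C)) = Comp C (act_mor C w id (Idm C (pzero C))) (act_mor C w' id (Idm C (pzero C)))"
proof -
  let ?Z = "pzero C" let ?I = "Idm C ?Z"
  let ?g = "act_mor C w' id ?I"
  have I: "?I \<in> Mor C" "Dom C ?I = ?Z" "Cod C ?I = ?Z" using c_id_mor c_id_dom c_id_cod zero_Obj by auto
  have g: "?g \<in> Mor C" "Dom C ?g = ?Z" "Cod C ?g = ?Z" using e_Mor[OF w'] by auto
  have ww: "inj (w \<circ> w')" using w w' by (rule inj_compose)
  have "act_mor C (w \<circ> w') id ?I = Comp C (act_mor C (w \<circ> w') w ?I) (act_mor C w id ?I)"
    using act_mor_comp[of id w "w \<circ> w'" ?I ?I] w ww I II by simp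
  also have "act_mor C (w \<circ> w') w ?I = act_mor C w w ?g"
    using act_mor_act_mor[of id w' w w ?I] w w' I by simp
  also have "Comp C (act_mor C w w ?g) (act_mor C w id ?I) = act_mor C w id ?g"
    using act_mor_comp[of id w w ?I ?g] w I g c_idr[OF g(1)] by simp
  also have "\<dots> = Comp C (act_mor C w id ?I) (act_mor C id id ?g)"
    using act_mor_comp[of id id w ?g ?I] w I g c_idl[OF g(1)] by simp
  also have "act_mor C id id ?g = ?g" using act_mor_id g by blast
  finally show ?thesis .
qed

lemma e_cancel:
  fixes p :: "nat \<Rightarrow> nat"
  assumes p: "inj p" and a: "a \<in> Mor C" "Dom C a = pzero C"
    and b: "b \<in> Mor C" "Dom C b = pzero C"
    and eq: "Comp C a (act_mor C p id (Idm C (pzero C))) = Comp C b (act_mor C p id (Idm C (pzero C)))"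
  shows "a = b"
proof -
  let ?Z = "pzero C" let ?I = "Idm C ?Z"
  let ?e = "act_mor C p id ?I" let ?e' = "act_mor C id p ?I"
  have e: "?e \<in> Mor C" "Dom C ?e = ?Z" "Cod C ?e = ?Z" using e_Mor[OF p] by auto
  have e': "?e' \<in> Mor C" "Dom C ?e' = ?Z" "Cod C ?e' = ?Z" using e'_Mor[OF p] by auto
  have "a = Comp C a (Comp C ?e ?e')" using e_inv2[OF p] c_idr[OF a(1)] a by simp
  also have "\<dots> = Comp C (Comp C a ?e) ?e'" using c_assoc[OF e'(1) e(1) a(1)] e e' a by simp
  also have "\<dots> = Comp C (Comp C b ?e) ?e'" using eq by simp
  also have "\<dots> = Comp C b (Comp C ?e ?e')" using c_assoc[OF e'(1) e(1) b(1)] e e' b by simp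
  also have "\<dots> = b" using e_inv2[OF p] c_idr[OF b(1)] b by simp
  finally show ?thesis .
qed

lemma e_agree:
  fixes a b p :: "nat \<Rightarrow> nat"
  assumes a: "inj a" and b: "inj b" and p: "inj p" and ab: "a \<circ> p = b \<circ> p"
  shows "act_mor C a id (Idm C (pzero C)) = act_mor C b id (Idm C (pzero C))"
proof -
  have "Comp C (act_mor C a id (Idm C (pzero C))) (act_mor C p id (Idm C (pzero C)))
      = Comp C (act_mor C b id (Idm C (pzero C))) (act_mor C p id (Idm C (pzero C)))"
    using e_hom[OF a p] e_hom[OF b p] ab by simp
  then show ?thesis using e_cancel[OF p] e_Mor[OF a] e_Mor[OF b] by blast
qed

lemma e_triv: assumes w: "inj w" shows "act_mor C w id (Idm C (pzero C)) = Idm C (pzero C)"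
proof -
  have even_case: "act_mor C a id (Idm C (pzero C)) = Idm C (pzero C)" if a: "inj a" "\<forall>n. even (a n)" for a
  proof -
    define c where "c = (\<lambda>n::nat. if even n then a n else n)"
    have ic: "inj c"
    proof (rule injI)
      fix x y assume "c x = c y" then show "x = y" using a unfolding c_def
        by (cases "even x"; cases "even y") (auto simp: inj_eq)
    qed
    have d1: "inj (\<lambda>n::nat. 2 * n)" by (rule injI) simp
    have d2: "inj (\<lambda>n::nat. 2 * n + 1)" by (rule injI) simp
    have "act_mor C a id (Idm C (pzero C)) = act_mor C c id (Idm C (pzero C))"
      by (rule e_agree[OF a(1) ic d1]) (auto simp: c_def)
    also have "\<dots> = act_mor C id id (Idm C (pzero C))"
      by (rule e_agree[OF ic _ d2]) (auto simp: c_def)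
    also have "\<dots> = Idm C (pzero C)" using act_mor_id c_id_mor zero_Obj by blast
    finally show ?thesis .
  qed
  have d1: "inj (\<lambda>n::nat. 2 * n)" by (rule injI) simp
  have "act_mor C ((\<lambda>n::nat. 2 * n) \<circ> w) id (Idm C (pzero C))
     = Comp C (act_mor C (\<lambda>n::nat. 2 * n) id (Idm C (pzero C))) (act_mor C w id (Idm C (pzero C)))"
    by (rule e_hom[OF d1 w])
  moreover have "act_mor C ((\<lambda>n::nat. 2 * n) \<circ> w) id (Idm C (pzero C)) = Idm C (pzero C)"
    by (rule even_case) (use inj_compose[OF d1 w] in auto)
  moreover have "act_mor C (\<lambda>n::nat. 2 * n) id (Idm C (pzero C)) = Idm C (pzero C)"
    by (rule even_case[OF d1]) auto
  ultimately show ?thesis using c_idl e_Mor[OF w] by metis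
qed

lemma act_mor_zero: assumes u: "inj u" and v: "inj v"
  shows "act_mor C v u (Idm C (pzero C)) = Idm C (pzero C)"
proof -
  let ?I = "Idm C (pzero C)"
  have "act_mor C v u ?I = Comp C (act_mor C v id ?I) (act_mor C id u ?I)"
    using act_mor_comp[of u id v ?I ?I] u v II c_id_mor c_id_dom c_id_cod zero_Obj by simp
  also have "\<dots> = act_mor C id u ?I" using e_triv[OF v] c_idl e'_Mor[OF u] by metis
  also have "\<dots> = Comp C (act_mor C id u ?I) (act_mor C u id ?I)"
    using e_triv[OF u] c_idr e'_Mor[OF u] by metis
  also have "\<dots> = ?I" by (rule e_inv1[OF u])
  finally show ?thesis .
qed

end




section \<open>Products\<close>

lemma prod_simps[simp]:
  "Obj (prod_pcat C D) = Obj C \<times> Obj D"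
  "Mor (prod_pcat C D) = Mor C \<times> Mor D"
  "Dom (prod_pcat C D) (f, g) = (Dom C f, Dom D g)"
  "Cod (prod_pcat C D) (f, g) = (Cod C f, Cod D g)"
  "Idm (prod_pcat C D) (X, Y) = (Idm C X, Idm D Y)"
  "Comp (prod_pcat C D) (f', g') (f, g) = (Comp C f' f, Comp D g' g)"
  "act_ob (prod_pcat C D) u (X, Y) = (act_ob C u X, act_ob D u Y)"
  "act_mor (prod_pcat C D) v u (f, g) = (act_mor C v u f, act_mor D v u g)"
  "pzero (prod_pcat C D) = (pzero C, pzero D)"
  "pplus_ob (prod_pcat C D) (X, Y) (X', Y') = (pplus_ob C X X', pplus_ob D Y Y')"
  "pplus_mor (prod_pcat C D) (f, g) (f', g') = (pplus_mor C f f', pplus_mor D g g')"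
  unfolding prod_pcat_def by simp_all

lemma supported_prod: "supported_on (prod_pcat C D) (X, Y) A \<longleftrightarrow> supported_on C X A \<and> supported_on D Y A"
  unfolding supported_on_def by auto

locale psum2 = C: psum C + D: psum D
  for C :: "('o,'m,'x) pcat_scheme" and D :: "('p,'n,'y) pcat_scheme"
begin

lemma supp_prod_ge: "supp C X \<union> supp D Y \<subseteq> supp (prod_pcat C D) (X, Y)"
  unfolding supp_def supported_prod by blast

lemma supp_prod_le: assumes "X \<in> Obj C" "Y \<in> Obj D"
  shows "supp (prod_pcat C D) (X, Y) \<subseteq> supp C X \<union> supp D Y"
proof
  fix x assume x: "x \<in> supp (prod_pcat C D) (X, Y)"
  show "x \<in> supp C X \<union> supp D Y"
  proof (rule ccontr)
    assume "x \<notin> supp C X \<union> supp D Y"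
    then obtain A B where A: "finite A" "supported_on C X A" "x \<notin> A"
      and B: "finite B" "supported_on D Y B" "x \<notin> B"
      using C.not_in_supp D.not_in_supp assms by (metis UnCI)
    have "supported_on (prod_pcat C D) (X, Y) (A \<union> B)"
      unfolding supported_prod using A B C.supported_mono D.supported_mono by blast
    then have "supp (prod_pcat C D) (X, Y) \<subseteq> A \<union> B" unfolding supp_def using A B by auto
    then show False using x A B by blast
  qed
qed

lemma supp_prod: "X \<in> Obj C \<Longrightarrow> Y \<in> Obj D \<Longrightarrow> supp (prod_pcat C D) (X, Y) = supp C X \<union> supp D Y"
  using supp_prod_le supp_prod_ge by blast

lemma disj_ob_prod: "disj_ob (prod_pcat C D) (X, Y) (X', Y') \<longleftrightarrow>
   X \<in> Obj C \<and> Y \<in> Obj D \<and> X' \<in> Obj C \<and> Y' \<in> Obj D \<and>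
   (supp C X \<union> supp D Y) \<inter> (supp C X' \<union> supp D Y') = {}"
  unfolding disj_ob_def using supp_prod by auto

lemma disj_ob_prodD: "disj_ob (prod_pcat C D) (X, Y) (X', Y') \<Longrightarrow> disj_ob C X X' \<and> disj_ob D Y Y'"
  unfolding disj_ob_prod by (auto simp: disj_ob_def)

lemma disj_mor_prodD: "disj_mor (prod_pcat C D) (f, g) (f', g') \<Longrightarrow> disj_mor C f f' \<and> disj_mor D g g'"
  unfolding disj_mor_def using disj_ob_prodD by auto

lemma disj_ob_prodD': "disj_ob (prod_pcat C D) P P' \<Longrightarrow> disj_ob C (fst P) (fst P') \<and> disj_ob D (snd P) (snd P')"
  using disj_ob_prodD by (cases P; cases P') auto

lemma disj_mor_prodD': "disj_mor (prod_pcat C D) f f' \<Longrightarrow> disj_mor C (fst f) (fst f') \<and> disj_mor D (snd f) (snd f')"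
  using disj_mor_prodD by (cases f; cases f') auto

lemma prod_category: "category (prod_pcat C D)"
  unfolding category_def hom_def
  by (auto simp: C.c_dom C.c_cod C.c_id_mor D.c_id_mor C.c_id_dom D.c_id_dom C.c_id_cod D.c_id_cod
      C.c_comp_mor D.c_comp_mor C.c_comp_dom D.c_comp_dom C.c_comp_cod D.c_comp_cod
      C.c_idl D.c_idl C.c_idr D.c_idr C.c_assoc D.c_assoc D.c_dom D.c_cod)

lemma prod_EM: "EM_category (prod_pcat C D)"
  unfolding EM_category_def hom_def
  by (auto simp: prod_category C.act_ob_Obj D.act_ob_Obj C.act_mor_hom D.act_mor_hom
     C.act_mor_Idm D.act_mor_Idm C.act_mor_comp D.act_mor_comp C.act_ob_id D.act_ob_id
     C.act_ob_comp D.act_ob_comp C.act_mor_id D.act_mor_id C.act_mor_act_mor D.act_mor_act_mor)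

lemma prod_parsummable: "parsummable (prod_pcat C D)"
proof -
  have fs: "\<forall>P\<in>Obj (prod_pcat C D). \<exists>A. finite A \<and> supported_on (prod_pcat C D) P A"
  proof
    fix P assume "P \<in> Obj (prod_pcat C D)"
    then obtain X Y where P: "P = (X, Y)" "X \<in> Obj C" "Y \<in> Obj D" by auto
    obtain A where A: "finite A" "supported_on C X A" using C.fin_supp P by blast
    obtain B where B: "finite B" "supported_on D Y B" using D.fin_supp P by blast
    have "supported_on (prod_pcat C D) P (A \<union> B)"
      unfolding P supported_prod using A B C.supported_mono D.supported_mono by blast
    then show "\<exists>A. finite A \<and> supported_on (prod_pcat C D) P A" using A B by blast
  qed
  have z: "supp (prod_pcat C D) (pzero (prod_pcat C D)) = {}"
    using supp_prod C.zero_Obj D.zero_Obj C.supp_zero D.supp_zero by simp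
  show ?thesis
    unfolding parsummable_def
    apply (intro conjI)
    subgoal by (rule prod_EM)
    subgoal by (rule fs)
    subgoal using C.zero_Obj D.zero_Obj by simp
    subgoal by (rule z)
    subgoal using disj_ob_prodD C.plus_Obj D.plus_Obj by force
    subgoal unfolding hom_def using disj_mor_prodD C.plus_hom D.plus_hom by force
    subgoal using disj_ob_prodD C.plus_Idm D.plus_Idm by force
    subgoal using disj_mor_prodD C.plus_interchange D.plus_interchange by force
    subgoal using C.unit_ob D.unit_ob by force
    subgoal using C.unit_mor D.unit_mor by force
    subgoal using disj_ob_prodD C.assoc_ob D.assoc_ob by force
    subgoal using disj_mor_prodD C.assoc_mor D.assoc_mor by force
    subgoal using disj_ob_prodD C.comm_ob D.comm_ob by force
    subgoal using disj_mor_prodD C.comm_mor D.comm_mor by force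
    subgoal using disj_ob_prodD C.eq_ob D.eq_ob by force
    subgoal using disj_mor_prodD C.eq_mor D.eq_mor by force
    done
qed

sublocale P: psum "prod_pcat C D" by unfold_locales (rule prod_parsummable)

end




context psum
begin

lemma disj_act: assumes u: "inj u" and d: "disj_ob C X Y" shows "disj_ob C (act_ob C u X) (act_ob C u Y)"
proof -
  have X: "X \<in> Obj C" and Y: "Y \<in> Obj C" and e: "supp C X \<inter> supp C Y = {}" using d unfolding disj_ob_def by auto
  have "u ` supp C X \<inter> u ` supp C Y = {}" using e u by (simp add: image_Int[symmetric])
  then show ?thesis using supp_act[OF X u] supp_act[OF Y u] act_ob_Obj[OF u X] act_ob_Obj[OF u Y]
    unfolding disj_ob_def by blast
qed

lemma str_hom: "inj u \<Longrightarrow> inj v \<Longrightarrow> X \<in> Obj C \<Longrightarrow> act_mor C v u (Idm C X) \<in> Mor C \<and>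
   Dom C (act_mor C v u (Idm C X)) = act_ob C u X \<and> Cod C (act_mor C v u (Idm C X)) = act_ob C v X"
  using act_mor_hom[of u v "Idm C X"] c_id_mor c_id_dom c_id_cod by auto

lemma IdId: "X \<in> Obj C \<Longrightarrow> Comp C (Idm C X) (Idm C X) = Idm C X"
  using c_idl[OF c_id_mor[of X]] c_id_cod by simp

lemma str_comp: "inj u \<Longrightarrow> inj v \<Longrightarrow> inj w \<Longrightarrow> X \<in> Obj C \<Longrightarrow>
  Comp C (act_mor C w v (Idm C X)) (act_mor C v u (Idm C X)) = act_mor C w u (Idm C X)"
  using act_mor_comp[of u v w "Idm C X" "Idm C X"] c_id_mor c_id_dom c_id_cod IdId by simp

lemma str_id: "X \<in> Obj C \<Longrightarrow> act_mor C id id (Idm C X) = Idm C X"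
  using act_mor_id c_id_mor by blast

lemma str_act: "inj u \<Longrightarrow> inj v \<Longrightarrow> inj u' \<Longrightarrow> inj v' \<Longrightarrow> X \<in> Obj C \<Longrightarrow>
  act_mor C v' v (Idm C (act_ob C u X)) = act_mor C (v' \<circ> u) (v \<circ> u) (Idm C X)"
  using act_mor_Idm[of u X, symmetric] act_mor_act_mor[of u u v v' "Idm C X"] c_id_mor by simp

lemma nat_str: "inj u \<Longrightarrow> inj v \<Longrightarrow> f \<in> Mor C \<Longrightarrow>
  Comp C (act_mor C v v f) (act_mor C v u (Idm C (Dom C f))) = act_mor C v u f"
  using act_mor_comp[of u v v "Idm C (Dom C f)" f] c_id_mor c_dom c_id_cod c_idr by simp

lemma nat_str2: "inj u \<Longrightarrow> inj v \<Longrightarrow> f \<in> Mor C \<Longrightarrow>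
  Comp C (act_mor C v u (Idm C (Cod C f))) (act_mor C u u f) = act_mor C v u f"
  using act_mor_comp[of u u v f "Idm C (Cod C f)"] c_id_mor c_cod c_id_dom c_idl by simp

end

section \<open>The pushforward parsummable category\<close>

lemma push_simps[simp]:
  "Obj (push_pcat C D Go Gm) = Obj C"
  "Mor (push_pcat C D Go Gm) = {(X, Y, d). X \<in> Obj C \<and> Y \<in> Obj C \<and> d \<in> Mor D \<and> Dom D d = Go X \<and> Cod D d = Go Y}"
  "Dom (push_pcat C D Go Gm) (X, Y, d) = X"
  "Cod (push_pcat C D Go Gm) (X, Y, d) = Y"
  "Idm (push_pcat C D Go Gm) X = (X, X, Idm D (Go X))"
  "Comp (push_pcat C D Go Gm) (Y', Z, e) (X, Y, d) = (X, Z, Comp D e d)"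
  "act_ob (push_pcat C D Go Gm) = act_ob C"
  "pzero (push_pcat C D Go Gm) = pzero C"
  "pplus_ob (push_pcat C D Go Gm) = pplus_ob C"
  "pplus_mor (push_pcat C D Go Gm) (X, Y, d) (X', Y', d') = (pplus_ob C X X', pplus_ob C Y Y', pplus_mor D d d')"
  unfolding push_pcat_def by (simp_all add: hom_def)

lemma push_act_mor:   "act_mor (push_pcat C D Go Gm) v u (X, Y, d) = (act_ob C u X, act_ob C v Y,
        Comp D (Gm (act_mor C v id (Idm C Y))) (Comp D d (Gm (act_mor C id u (Idm C X)))))"
  unfolding push_pcat_def by simp

lemma push_supported[simp]: "supported_on (push_pcat C D Go Gm) = supported_on C"
  unfolding supported_on_def[abs_def] by simp

lemma push_supp[simp]: "supp (push_pcat C D Go Gm) = supp C"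
  unfolding supp_def[abs_def] by simp

lemma push_disj_ob[simp]: "disj_ob (push_pcat C D Go Gm) = disj_ob C"
  unfolding disj_ob_def[abs_def] by simp

locale pushl = C: psum C + D: psum D
  for C :: "('o,'m,'x) pcat_scheme" and D :: "('p,'n,'y) pcat_scheme" +
  fixes Go :: "'o \<Rightarrow> 'p" and Gm :: "'m \<Rightarrow> 'n"
  assumes G: "is_functor C D Go Gm" and Gs: "preserves_sums C D Go Gm"
begin

abbreviation "E \<equiv> push_pcat C D Go Gm"

lemma G_ob: "X \<in> Obj C \<Longrightarrow> Go X \<in> Obj D" using G unfolding is_functor_def by blast
lemma G_mor: "f \<in> Mor C \<Longrightarrow> Gm f \<in> Mor D \<and> Dom D (Gm f) = Go (Dom C f) \<and> Cod D (Gm f) = Go (Cod C f)"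
  using G unfolding is_functor_def hom_def by blast
lemma G_id: "X \<in> Obj C \<Longrightarrow> Gm (Idm C X) = Idm D (Go X)" using G unfolding is_functor_def by blast
lemma G_comp: "f \<in> Mor C \<Longrightarrow> g \<in> Mor C \<Longrightarrow> Cod C f = Dom C g \<Longrightarrow> Gm (Comp C g f) = Comp D (Gm g) (Gm f)"
  using G unfolding is_functor_def by blast
lemma Gs_zero: "Go (pzero C) = pzero D" using Gs unfolding preserves_sums_def by blast
lemma Gs_disj: "disj_ob C X Y \<Longrightarrow> disj_ob D (Go X) (Go Y)" using Gs unfolding preserves_sums_def by blast
lemma Gs_plus: "disj_ob C X Y \<Longrightarrow> Go (pplus_ob C X Y) = pplus_ob D (Go X) (Go Y)" using Gs unfolding preserves_sums_def by blast
lemma Gs_plus_mor: "disj_mor C f g \<Longrightarrow> Gm (pplus_mor C f g) = pplus_mor D (Gm f) (Gm g)" using Gs unfolding preserves_sums_def by blast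

definition sv where "sv v Y = Gm (act_mor C v id (Idm C Y))"
definition su where "su u X = Gm (act_mor C id u (Idm C X))"

lemma sv_mor: "inj v \<Longrightarrow> Y \<in> Obj C \<Longrightarrow> sv v Y \<in> Mor D \<and> Dom D (sv v Y) = Go Y \<and> Cod D (sv v Y) = Go (act_ob C v Y)"
  unfolding sv_def using G_mor C.str_hom[of id v Y] C.act_ob_id by auto
lemma su_mor: "inj u \<Longrightarrow> X \<in> Obj C \<Longrightarrow> su u X \<in> Mor D \<and> Dom D (su u X) = Go (act_ob C u X) \<and> Cod D (su u X) = Go X"
  unfolding su_def using G_mor C.str_hom[of u id X] C.act_ob_id by auto

lemma G_str_comp: "inj u \<Longrightarrow> inj v \<Longrightarrow> inj w \<Longrightarrow> X \<in> Obj C \<Longrightarrow>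
  Comp D (Gm (act_mor C w v (Idm C X))) (Gm (act_mor C v u (Idm C X))) = Gm (act_mor C w u (Idm C X))"
  using G_comp[of "act_mor C v u (Idm C X)" "act_mor C w v (Idm C X)"] C.str_hom[of u v X] C.str_hom[of v w X]
    C.str_comp by simp

lemma su_sv: "inj v \<Longrightarrow> Y \<in> Obj C \<Longrightarrow> Comp D (su v Y) (sv v Y) = Idm D (Go Y)"
  unfolding su_def sv_def using G_str_comp[of id v id Y] C.str_id G_id by simp
lemma sv_su: "inj v \<Longrightarrow> Y \<in> Obj C \<Longrightarrow> Comp D (sv v Y) (su v Y) = Idm D (Go (act_ob C v Y))"
  unfolding su_def sv_def using G_str_comp[of v id v Y] C.act_mor_Idm G_id C.act_ob_Obj by simp
lemma sv_id: "Y \<in> Obj C \<Longrightarrow> sv id Y = Idm D (Go Y)" unfolding sv_def using C.str_id G_id by simp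
lemma su_id: "Y \<in> Obj C \<Longrightarrow> su id Y = Idm D (Go Y)" unfolding su_def using C.str_id G_id by simp
lemma sv_comp: "inj u \<Longrightarrow> inj v \<Longrightarrow> Y \<in> Obj C \<Longrightarrow>
   Comp D (sv v (act_ob C u Y)) (sv u Y) = sv (v \<circ> u) Y"
  unfolding sv_def using C.str_act[of u id id v Y] G_str_comp[of id u "v \<circ> u" Y] inj_compose[of v u] by simp
lemma su_comp: "inj u \<Longrightarrow> inj v \<Longrightarrow> X \<in> Obj C \<Longrightarrow>
   Comp D (su u X) (su v (act_ob C u X)) = su (v \<circ> u) X"
  unfolding su_def using C.str_act[of u v id id X] G_str_comp[of "v \<circ> u" u id X] inj_compose[of v u] by simp

lemma mor_E: "f \<in> Mor E \<longleftrightarrow> (\<exists>X Y d. f = (X, Y, d) \<and> X \<in> Obj C \<and> Y \<in> Obj C \<and> d \<in> Mor D \<and> Dom D d = Go X \<and> Cod D d = Go Y)"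
  by (auto simp: hom_def)

lemma mor_E'[simp]: "(X, Y, d) \<in> Mor E \<longleftrightarrow> X \<in> Obj C \<and> Y \<in> Obj C \<and> d \<in> Mor D \<and> Dom D d = Go X \<and> Cod D d = Go Y"
  by (auto simp: hom_def)

lemma E_category: "category E"
  unfolding category_def hom_def
  apply (intro conjI)
  subgoal by auto
  subgoal using G_ob D.c_id_mor D.c_id_dom D.c_id_cod by (auto simp: hom_def)
  subgoal by (auto simp: D.c_comp_mor D.c_comp_dom D.c_comp_cod)
  subgoal using D.c_idl D.c_idr by fastforce
  subgoal by (auto simp: D.c_assoc D.c_comp_dom D.c_comp_cod)
  done


lemma act_mor_E: "act_mor E v u (X, Y, d) = (act_ob C u X, act_ob C v Y, Comp D (sv v Y) (Comp D d (su u X)))"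
  by (simp add: sv_def su_def push_act_mor)

lemma sv_comp': "inj u \<Longrightarrow> inj v \<Longrightarrow> Y \<in> Obj C \<Longrightarrow> x \<in> Mor D \<Longrightarrow> Cod D x = Go Y \<Longrightarrow>
   Comp D (sv v (act_ob C u Y)) (Comp D (sv u Y) x) = Comp D (sv (v \<circ> u) Y) x"
  using D.c_assoc[of x "sv u Y" "sv v (act_ob C u Y)"] sv_mor[of u Y] sv_mor[of v "act_ob C u Y"] C.act_ob_Obj
    sv_comp by simp

lemma su_sv': "inj v \<Longrightarrow> Y \<in> Obj C \<Longrightarrow> x \<in> Mor D \<Longrightarrow> Cod D x = Go Y \<Longrightarrow>
   Comp D (su v Y) (Comp D (sv v Y) x) = x"
  using D.c_assoc[of x "sv v Y" "su v Y"] sv_mor[of v Y] su_mor[of v Y] su_sv D.c_idl[of x] by simp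

lemma act_E_mor: assumes "inj u" "inj v" "X \<in> Obj C" "Y \<in> Obj C" "d \<in> Mor D" "Dom D d = Go X" "Cod D d = Go Y"
  shows "Comp D (sv v Y) (Comp D d (su u X)) \<in> Mor D \<and> Dom D (Comp D (sv v Y) (Comp D d (su u X))) = Go (act_ob C u X)
    \<and> Cod D (Comp D (sv v Y) (Comp D d (su u X))) = Go (act_ob C v Y)"
  using assms sv_mor[of v Y] su_mor[of u X] by (simp add: D.c_comp_mor D.c_comp_dom D.c_comp_cod)

lemma E_EM: "EM_category E"
  unfolding EM_category_def
proof (intro conjI allI impI ballI)
  show "category E" by (rule E_category)
next
  fix u :: "nat \<Rightarrow> nat" and X assume "inj u \<and> X \<in> Obj E" then show "act_ob E u X \<in> Obj E" using C.act_ob_Obj by simp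
next
  fix u v :: "nat \<Rightarrow> nat" and f assume a: "inj u \<and> inj v \<and> f \<in> Mor E"
  obtain X Y d where f: "f = (X, Y, d)" by (rule prod_cases3)
  show "act_mor E v u f \<in> hom E (act_ob E u (Dom E f)) (act_ob E v (Cod E f))"
    using a act_E_mor[of u v X Y d] C.act_ob_Obj unfolding f hom_def act_mor_E by simp
next
  fix u :: "nat \<Rightarrow> nat" and X assume a: "inj u \<and> X \<in> Obj E"
  then have "Comp D (sv u X) (Comp D (Idm D (Go X)) (su u X)) = Idm D (Go (act_ob C u X))"
    using su_mor[of u X] D.c_idl[of "su u X"] sv_su[of u X] by simp
  then show "act_mor E u u (Idm E X) = Idm E (act_ob E u X)" by (simp add: act_mor_E)
next
  fix u v w :: "nat \<Rightarrow> nat" and f g assume a: "inj u \<and> inj v \<and> inj w \<and> f \<in> Mor E \<and> g \<in> Mor E \<and> Cod E f = Dom E g"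
  obtain X Y d where f: "f = (X, Y, d)" by (rule prod_cases3)
  obtain Y' Z e where g: "g = (Y', Z, e)" by (rule prod_cases3)
  have Y': "Y' = Y" using a f g by simp
  have X: "X \<in> Obj C" and Y: "Y \<in> Obj C" and Z: "Z \<in> Obj C" and d: "d \<in> Mor D" "Dom D d = Go X" "Cod D d = Go Y"
    and e: "e \<in> Mor D" "Dom D e = Go Y" "Cod D e = Go Z" using a f g Y' by auto
  have u: "inj u" and v: "inj v" and w: "inj w" using a by auto
  note m = sv_mor[OF w Z] su_mor[OF v Y] sv_mor[OF v Y] su_mor[OF u X]
  have "Comp D (Comp D (sv w Z) (Comp D e (su v Y))) (Comp D (sv v Y) (Comp D d (su u X)))
      = Comp D (sv w Z) (Comp D e (Comp D (su v Y) (Comp D (sv v Y) (Comp D d (su u X)))))"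
    using m d e by (simp add: D.c_assoc D.c_comp_mor D.c_comp_dom D.c_comp_cod)
  also have "\<dots> = Comp D (sv w Z) (Comp D e (Comp D d (su u X)))"
    using su_sv'[OF v Y, of "Comp D d (su u X)"] m d by (simp add: D.c_comp_mor D.c_comp_cod)
  also have "\<dots> = Comp D (sv w Z) (Comp D (Comp D e d) (su u X))"
    using m d e by (simp add: D.c_assoc)
  finally show "Comp E (act_mor E w v g) (act_mor E v u f) = act_mor E w u (Comp E g f)"
    unfolding f g Y' by (simp add: act_mor_E)
next
  fix X assume "X \<in> Obj E" then show "act_ob E id X = X" using C.act_ob_id by simp
next
  fix u v :: "nat \<Rightarrow> nat" and X assume "inj u \<and> inj v \<and> X \<in> Obj E" then show "act_ob E v (act_ob E u X) = act_ob E (v \<circ> u) X"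
    using C.act_ob_comp by simp
next
  fix f assume a: "f \<in> Mor E"
  obtain X Y d where f: "f = (X, Y, d)" by (rule prod_cases3)
  show "act_mor E id id f = f"
    using a unfolding f act_mor_E using sv_id su_id C.act_ob_id D.c_idl[of d] D.c_idr[of d] by simp
next
  fix u u' v v' :: "nat \<Rightarrow> nat" and f assume a: "inj u \<and> inj u' \<and> inj v \<and> inj v' \<and> f \<in> Mor E"
  obtain X Y d where f: "f = (X, Y, d)" by (rule prod_cases3)
  have X: "X \<in> Obj C" and Y: "Y \<in> Obj C" and d: "d \<in> Mor D" "Dom D d = Go X" "Cod D d = Go Y"
    and u: "inj u" and u': "inj u'" and v: "inj v" and v': "inj v'" using a f by auto
  have uX: "act_ob C u X \<in> Obj C" and uY: "act_ob C u' Y \<in> Obj C" using C.act_ob_Obj X Y u u' by auto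
  note m = sv_mor[OF v' uY] sv_mor[OF u' Y] su_mor[OF u X] su_mor[OF v uX]
  have "Comp D (sv v' (act_ob C u' Y)) (Comp D (Comp D (sv u' Y) (Comp D d (su u X))) (su v (act_ob C u X)))
     = Comp D (sv v' (act_ob C u' Y)) (Comp D (sv u' Y) (Comp D d (Comp D (su u X) (su v (act_ob C u X)))))"
    using m d by (simp add: D.c_assoc D.c_comp_mor D.c_comp_dom D.c_comp_cod)
  also have "\<dots> = Comp D (sv (v' \<circ> u') Y) (Comp D d (su (v \<circ> u) X))"
    using sv_comp'[OF u' v' Y] su_comp[OF u v X] m d su_mor[OF inj_compose[OF v u] X] by (simp add: D.c_comp_mor D.c_comp_dom D.c_comp_cod)
  finally show "act_mor E v' v (act_mor E u' u f) = act_mor E (v' \<circ> u') (v \<circ> u) f"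
    unfolding f act_mor_E using C.act_ob_comp X Y u u' v v' by simp
qed


lemma dmor: "a \<in> Mor D \<Longrightarrow> a' \<in> Mor D \<Longrightarrow> Dom D a = Go P \<Longrightarrow> Dom D a' = Go P' \<Longrightarrow>
  Cod D a = Go Q \<Longrightarrow> Cod D a' = Go Q' \<Longrightarrow> disj_ob C P P' \<Longrightarrow> disj_ob C Q Q' \<Longrightarrow> disj_mor D a a'"
  unfolding disj_mor_def using Gs_disj by simp

lemma disj_mor_E: "disj_mor E (X, Y, d) (X', Y', d') \<longleftrightarrow>
  (X, Y, d) \<in> Mor E \<and> (X', Y', d') \<in> Mor E \<and> disj_ob C X X' \<and> disj_ob C Y Y'"
  unfolding disj_mor_def by simp

lemma disj_mor_ED: assumes "disj_mor E (X, Y, d) (X', Y', d')"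
  shows "X \<in> Obj C" "Y \<in> Obj C" "X' \<in> Obj C" "Y' \<in> Obj C" "d \<in> Mor D" "d' \<in> Mor D"
   "Dom D d = Go X" "Cod D d = Go Y" "Dom D d' = Go X'" "Cod D d' = Go Y'"
   "disj_ob C X X'" "disj_ob C Y Y'" "disj_mor D d d'"
  using assms unfolding disj_mor_E using dmor[of d d' X X' Y Y'] by auto

lemma sv_plus: assumes v: "inj v" and dj: "disj_ob C Y Y'"
  shows "sv v (pplus_ob C Y Y') = pplus_mor D (sv v Y) (sv v Y')"
proof -
  have Y: "Y \<in> Obj C" "Y' \<in> Obj C" using dj unfolding disj_ob_def by auto
  have dI: "disj_mor C (Idm C Y) (Idm C Y')" unfolding disj_mor_def using dj Y C.c_id_mor C.c_id_dom C.c_id_cod by simp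
  have dA: "disj_mor C (act_mor C v id (Idm C Y)) (act_mor C v id (Idm C Y'))"
    unfolding disj_mor_def using C.str_hom[of id v Y] C.str_hom[of id v Y'] v Y C.act_ob_id dj C.disj_act[OF v dj] by simp
  show ?thesis unfolding sv_def
    using C.plus_Idm[OF dj, symmetric] C.eq_mor[OF _ v dI, of id] Gs_plus_mor[OF dA] by simp
qed

lemma su_plus: assumes u: "inj u" and dj: "disj_ob C X X'"
  shows "su u (pplus_ob C X X') = pplus_mor D (su u X) (su u X')"
proof -
  have X: "X \<in> Obj C" "X' \<in> Obj C" using dj unfolding disj_ob_def by auto
  have dI: "disj_mor C (Idm C X) (Idm C X')" unfolding disj_mor_def using dj X C.c_id_mor C.c_id_dom C.c_id_cod by simp
  have dA: "disj_mor C (act_mor C id u (Idm C X)) (act_mor C id u (Idm C X'))"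
    unfolding disj_mor_def using C.str_hom[of u id X] C.str_hom[of u id X'] u X C.act_ob_id dj C.disj_act[OF u dj] by simp
  show ?thesis unfolding su_def
    using C.plus_Idm[OF dj, symmetric] C.eq_mor[OF u _ dI, of id] Gs_plus_mor[OF dA] by simp
qed

lemma E_parsummable: "parsummable E"
  unfolding parsummable_def
proof (intro conjI allI impI ballI)
  show "EM_category E" by (rule E_EM)
next
  fix X assume "X \<in> Obj E" then show "\<exists>A. finite A \<and> supported_on E X A" using C.fin_supp by simp
next
  show "pzero E \<in> Obj E" using C.zero_Obj by simp
next
  show "supp E (pzero E) = {}" using C.supp_zero by simp
next
  fix X Y assume "disj_ob E X Y" then show "pplus_ob E X Y \<in> Obj E" using C.plus_Obj by simp
next
  fix f g assume a: "disj_mor E f g"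
  obtain X Y d where f: "f = (X, Y, d)" by (rule prod_cases3)
  obtain X' Y' d' where g: "g = (X', Y', d')" by (rule prod_cases3)
  note dd = disj_mor_ED[OF a[unfolded f g]]
  show "pplus_mor E f g \<in> hom E (pplus_ob E (Dom E f) (Dom E g)) (pplus_ob E (Cod E f) (Cod E g))"
    unfolding f g hom_def using dd D.plus_hom[OF dd(13)] C.plus_Obj Gs_plus by simp
next
  fix X Y assume a: "disj_ob E X Y"
  then show "pplus_mor E (Idm E X) (Idm E Y) = Idm E (pplus_ob E X Y)"
    using D.plus_Idm[OF Gs_disj] Gs_plus by simp
next
  fix f g f' g' assume a: "disj_mor E f g \<and> disj_mor E f' g' \<and> Cod E f = Dom E f' \<and> Cod E g = Dom E g'"
  obtain X Y d where f: "f = (X, Y, d)" by (rule prod_cases3)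
  obtain X' Y' d' where g: "g = (X', Y', d')" by (rule prod_cases3)
  obtain P Z e where f': "f' = (P, Z, e)" by (rule prod_cases3)
  obtain P' Z' e' where g': "g' = (P', Z', e')" by (rule prod_cases3)
  have PP: "P = Y" "P' = Y'" using a f g f' g' by auto
  note d1 = disj_mor_ED[of X Y d X' Y' d'] and d2 = disj_mor_ED[of Y Z e Y' Z' e']
  show "pplus_mor E (Comp E f' f) (Comp E g' g) = Comp E (pplus_mor E f' g') (pplus_mor E f g)"
    using a unfolding f g f' g' PP using D.plus_interchange[of d d' e e'] d1 d2 by simp
next
  fix X assume "X \<in> Obj E" then show "pplus_ob E X (pzero E) = X"
    using C.unit_ob by simp
next
  fix X assume "X \<in> Obj E" then show "pplus_ob E (pzero E) X = X"
    using C.unit_ob by simp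
next
  fix f assume a: "f \<in> Mor E"
  obtain X Y d where f: "f = (X, Y, d)" by (rule prod_cases3)
  show "pplus_mor E f (Idm E (pzero E)) = f"
    using a unfolding f using C.unit_ob D.unit_mor Gs_zero by simp
next
  fix f assume a: "f \<in> Mor E"
  obtain X Y d where f: "f = (X, Y, d)" by (rule prod_cases3)
  show "pplus_mor E (Idm E (pzero E)) f = f"
    using a unfolding f using C.unit_ob D.unit_mor Gs_zero by simp
next
  fix X Y Z assume "disj_ob E X Y \<and> disj_ob E X Z \<and> disj_ob E Y Z"
  then show "pplus_ob E (pplus_ob E X Y) Z = pplus_ob E X (pplus_ob E Y Z)" using C.assoc_ob by simp
next
  fix f g h assume a: "disj_mor E f g \<and> disj_mor E f h \<and> disj_mor E g h"
  obtain X Y d where f: "f = (X, Y, d)" by (rule prod_cases3)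
  obtain X' Y' d' where g: "g = (X', Y', d')" by (rule prod_cases3)
  obtain X'' Y'' d'' where h: "h = (X'', Y'', d'')" by (rule prod_cases3)
  have "disj_mor E (X, Y, d) (X', Y', d')" "disj_mor E (X, Y, d) (X'', Y'', d'')" "disj_mor E (X', Y', d') (X'', Y'', d'')"
    using a f g h by auto
  note dd = disj_mor_ED[OF this(1)] disj_mor_ED[OF this(2)] disj_mor_ED[OF this(3)]
  show "pplus_mor E (pplus_mor E f g) h = pplus_mor E f (pplus_mor E g h)"
    unfolding f g h using dd C.assoc_ob D.assoc_mor by simp
next
  fix X Y assume "disj_ob E X Y" then show "pplus_ob E X Y = pplus_ob E Y X" using C.comm_ob by simp
next
  fix f g assume a: "disj_mor E f g"
  obtain X Y d where f: "f = (X, Y, d)" by (rule prod_cases3)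
  obtain X' Y' d' where g: "g = (X', Y', d')" by (rule prod_cases3)
  note dd = disj_mor_ED[OF a[unfolded f g]]
  show "pplus_mor E f g = pplus_mor E g f" unfolding f g using dd C.comm_ob D.comm_mor by simp
next
  fix u :: "nat \<Rightarrow> nat" and X Y assume "inj u \<and> disj_ob E X Y"
  then show "act_ob E u (pplus_ob E X Y) = pplus_ob E (act_ob E u X) (act_ob E u Y)" using C.eq_ob by simp
next
  fix u v :: "nat \<Rightarrow> nat" and f g assume a: "inj u \<and> inj v \<and> disj_mor E f g"
  obtain X Y d where f: "f = (X, Y, d)" by (rule prod_cases3)
  obtain X' Y' d' where g: "g = (X', Y', d')" by (rule prod_cases3)
  have u: "inj u" and v: "inj v" using a by auto
  note dd = disj_mor_ED[of X Y d X' Y' d'] 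
  have dd: "X \<in> Obj C" "Y \<in> Obj C" "X' \<in> Obj C" "Y' \<in> Obj C" "d \<in> Mor D" "d' \<in> Mor D"
   "Dom D d = Go X" "Cod D d = Go Y" "Dom D d' = Go X'" "Cod D d' = Go Y'"
   "disj_ob C X X'" "disj_ob C Y Y'" "disj_mor D d d'" using dd a f g by auto
  have uX: "disj_ob C (act_ob C u X) (act_ob C u X')" using C.disj_act[OF u dd(11)] .
  have vY: "disj_ob C (act_ob C v Y) (act_ob C v Y')" using C.disj_act[OF v dd(12)] .
  note m = su_mor[OF u dd(1)] su_mor[OF u dd(3)] sv_mor[OF v dd(2)] sv_mor[OF v dd(4)]
  have db: "disj_mor D (su u X) (su u X')" using dmor m uX dd(11) by blast
  have da: "disj_mor D (sv v Y) (sv v Y')" using dmor m vY dd(12) by blast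
  have ddb: "disj_mor D (Comp D d (su u X)) (Comp D d' (su u X'))"
    using dmor[OF _ _ _ _ _ _ uX dd(12)] m dd by (simp add: D.c_comp_mor D.c_comp_dom D.c_comp_cod)
  have "Comp D (sv v (pplus_ob C Y Y')) (Comp D (pplus_mor D d d') (su u (pplus_ob C X X')))
     = Comp D (pplus_mor D (sv v Y) (sv v Y')) (pplus_mor D (Comp D d (su u X)) (Comp D d' (su u X')))"
    using sv_plus[OF v dd(12)] su_plus[OF u dd(11)] D.plus_interchange[OF db dd(13)] m dd by simp
  also have "\<dots> = pplus_mor D (Comp D (sv v Y) (Comp D d (su u X))) (Comp D (sv v Y') (Comp D d' (su u X')))"
    using D.plus_interchange[OF ddb da] m dd by (simp add: D.c_comp_cod)
  finally show "act_mor E v u (pplus_mor E f g) = pplus_mor E (act_mor E v u f) (act_mor E v u g)"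
    unfolding f g using C.eq_ob[OF u dd(11)] C.eq_ob[OF v dd(12)] by (simp add: act_mor_E)
qed

sublocale Ep: psum E by unfold_locales (rule E_parsummable)

end




lemma functorD:
  assumes "is_functor A B Fo Fm"
  shows fun_catA: "category A" and fun_catB: "category B"
    and fun_ob: "X \<in> Obj A \<Longrightarrow> Fo X \<in> Obj B"
    and fun_mor: "f \<in> Mor A \<Longrightarrow> Fm f \<in> Mor B"
    and fun_dom: "f \<in> Mor A \<Longrightarrow> Dom B (Fm f) = Fo (Dom A f)"
    and fun_cod: "f \<in> Mor A \<Longrightarrow> Cod B (Fm f) = Fo (Cod A f)"
    and fun_id: "X \<in> Obj A \<Longrightarrow> Fm (Idm A X) = Idm B (Fo X)"
    and fun_comp: "f \<in> Mor A \<Longrightarrow> g \<in> Mor A \<Longrightarrow> Cod A f = Dom A g \<Longrightarrow> Fm (Comp A g f) = Comp B (Fm g) (Fm f)"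
  using assms unfolding is_functor_def hom_def by blast+

lemma functor_comp:
  assumes F: "is_functor A B F1 F1m" and G: "is_functor B C F2 F2m"
  shows "is_functor A C (F2 \<circ> F1) (F2m \<circ> F1m)"
  unfolding is_functor_def hom_def
  using functorD[OF F] functorD[OF G] by (auto simp: cat_dom cat_cod cat_comp_mor)

lemma functor_id: "category A \<Longrightarrow> is_functor A A (\<lambda>X. X) (\<lambda>f. f)"
  unfolding is_functor_def hom_def by (auto simp: cat_dom cat_cod)

lemma iso_intro:
  assumes "category A" "f \<in> Mor A" "g \<in> Mor A" "Dom A g = Cod A f" "Cod A g = Dom A f"
    "Comp A g f = Idm A (Dom A f)" "Comp A f g = Idm A (Cod A f)"
  shows "is_iso A f"
  unfolding is_iso_def hom_def using assms by blast

lemma isoE: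
  assumes "is_iso A f"
  obtains g where "f \<in> Mor A" "g \<in> Mor A" "Dom A g = Cod A f" "Cod A g = Dom A f"
    "Comp A g f = Idm A (Dom A f)" "Comp A f g = Idm A (Cod A f)"
  using assms unfolding is_iso_def hom_def by blast

lemma functor_iso:
  assumes F: "is_functor A B Fo Fm" and i: "is_iso A f"
  shows "is_iso B (Fm f)"
proof -
  obtain g where g: "f \<in> Mor A" "g \<in> Mor A" "Dom A g = Cod A f" "Cod A g = Dom A f"
    "Comp A g f = Idm A (Dom A f)" "Comp A f g = Idm A (Cod A f)" using isoE[OF i] by blast
  have A: "category A" by (rule fun_catA[OF F])
  have "Comp B (Fm g) (Fm f) = Idm B (Dom B (Fm f))"
    using fun_comp[OF F g(1) g(2)] g fun_id[OF F cat_dom[OF A g(1)]] fun_dom[OF F g(1)] by simp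
  moreover have "Comp B (Fm f) (Fm g) = Idm B (Cod B (Fm f))"
    using fun_comp[OF F g(2) g(1)] g fun_id[OF F cat_cod[OF A g(1)]] fun_cod[OF F g(1)] by simp
  ultimately show ?thesis
    using iso_intro[OF fun_catB[OF F] fun_mor[OF F g(1)] fun_mor[OF F g(2)]]
      g fun_dom[OF F] fun_cod[OF F] by simp
qed

lemma iso_comp:
  assumes A: "category A" and f: "is_iso A f" and g: "is_iso A g" and fg: "Cod A f = Dom A g"
  shows "is_iso A (Comp A g f)"
proof -
  obtain f' where f': "f \<in> Mor A" "f' \<in> Mor A" "Dom A f' = Cod A f" "Cod A f' = Dom A f"
    "Comp A f' f = Idm A (Dom A f)" "Comp A f f' = Idm A (Cod A f)" using isoE[OF f] by blast
  obtain g' where g': "g \<in> Mor A" "g' \<in> Mor A" "Dom A g' = Cod A g" "Cod A g' = Dom A g"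
    "Comp A g' g = Idm A (Dom A g)" "Comp A g g' = Idm A (Cod A g)" using isoE[OF g] by blast
  have gf: "Comp A g f \<in> Mor A" "Dom A (Comp A g f) = Dom A f" "Cod A (Comp A g f) = Cod A g"
    using cat_comp_mor[OF A f'(1) g'(1) fg] cat_comp_dom[OF A f'(1) g'(1) fg] cat_comp_cod[OF A f'(1) g'(1) fg] by auto
  have fg': "Comp A f' g' \<in> Mor A" "Dom A (Comp A f' g') = Cod A g" "Cod A (Comp A f' g') = Dom A f"
    using cat_comp_mor[OF A g'(2) f'(2)] cat_comp_dom[OF A g'(2) f'(2)] cat_comp_cod[OF A g'(2) f'(2)] f' g' fg by auto
  have "Comp A (Comp A f' g') (Comp A g f) = Comp A f' (Comp A g' (Comp A g f))"
    using cat_assoc[OF A gf(1) g'(2) f'(2)] gf f' g' fg by simp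
  also have "Comp A g' (Comp A g f) = Comp A (Comp A g' g) f"
    using cat_assoc[OF A f'(1) g'(1) g'(2)] f' g' fg by simp
  also have "\<dots> = f" using g'(5) cat_idl[OF A f'(1)] fg by simp
  finally have 1: "Comp A (Comp A f' g') (Comp A g f) = Idm A (Dom A (Comp A g f))" using f'(5) gf by simp
  have "Comp A (Comp A g f) (Comp A f' g') = Comp A g (Comp A f (Comp A f' g'))"
    using cat_assoc[OF A fg'(1) f'(1) g'(1)] fg' f' g' fg by simp
  also have "Comp A f (Comp A f' g') = Comp A (Comp A f f') g'"
    using cat_assoc[OF A g'(2) f'(2) f'(1)] f' g' fg by simp
  also have "\<dots> = g'" using f'(6) cat_idl[OF A g'(2)] g' fg by simp
  finally have 2: "Comp A (Comp A g f) (Comp A f' g') = Idm A (Cod A (Comp A g f))" using g'(6) gf by simp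
  show ?thesis by (rule iso_intro[OF A gf(1) fg'(1)]) (use gf fg' 1 2 in auto)
qed

lemma pmorph_comp:
  assumes F: "pmorph A B F1 F1m" and G: "pmorph B C F2 F2m"
    and dj: "\<And>X Y. disj_ob A X Y \<Longrightarrow> disj_ob B (F1 X) (F1 Y)"
  shows "pmorph A C (F2 \<circ> F1) (F2m \<circ> F1m)"
proof -
  have fF: "is_functor A B F1 F1m" and fG: "is_functor B C F2 F2m" using F G unfolding pmorph_def by auto
  have djm: "disj_mor B (F1m f) (F1m g)" if "disj_mor A f g" for f g
    using that dj fun_mor[OF fF] fun_dom[OF fF] fun_cod[OF fF] unfolding disj_mor_def by simp
  show ?thesis
    unfolding pmorph_def
    using F G unfolding pmorph_def
    using functor_comp[OF fF fG] fun_ob[OF fF] fun_mor[OF fF] dj djm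
    by (auto simp: disj_ob_def)
qed

context pushl
begin

lemma I_simp: "push_I C Gm f = (Dom C f, Cod C f, Gm f)" by (simp add: push_I_def)

lemma I_functor: "is_functor C E (\<lambda>X. X) (push_I C Gm)"
  unfolding is_functor_def hom_def I_simp
  using C.cat E_category G_mor C.c_dom C.c_cod G_id C.c_id_dom C.c_id_cod C.c_comp_dom C.c_comp_cod G_comp
  by auto

lemma act_mor_E_G: assumes u: "inj u" and v: "inj v" and f: "f \<in> Mor C"
  shows "act_mor E v u (push_I C Gm f) = push_I C Gm (act_mor C v u f)"
proof -
  let ?X = "Dom C f" let ?Y = "Cod C f"
  have X: "?X \<in> Obj C" and Y: "?Y \<in> Obj C" using C.c_dom C.c_cod f by auto
  have a: "Comp C f (act_mor C id u (Idm C ?X)) = act_mor C id u f"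
    using C.nat_str[OF u _ f, of id] C.act_mor_id[OF f] by simp
  have b: "Comp C (act_mor C v id (Idm C ?Y)) (act_mor C id u f) = act_mor C v u f"
    using C.act_mor_comp[OF u _ v f C.c_id_mor[OF Y], of id] C.c_id_dom[OF Y] C.c_idl[OF f] by simp
  note h1 = C.str_hom[OF u _ X, of id] and h2 = C.str_hom[OF _ v Y, of id] and h3 = C.act_mor_hom[OF u _ f, of id]
  have "Comp D (Gm f) (su u ?X) = Gm (act_mor C id u f)"
    unfolding su_def using G_comp[of "act_mor C id u (Idm C ?X)" f] h1 f C.act_ob_id X a by simp
  moreover have "Comp D (sv v ?Y) (Gm (act_mor C id u f)) = Gm (act_mor C v u f)"
    unfolding sv_def using G_comp[of "act_mor C id u f" "act_mor C v id (Idm C ?Y)"] h2 h3 C.act_ob_id Y b by simp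
  ultimately have "Comp D (sv v ?Y) (Comp D (Gm f) (su u ?X)) = Gm (act_mor C v u f)" by simp
  then show ?thesis unfolding I_simp act_mor_E using C.act_mor_hom[OF u v f] by simp
qed

lemma I_plus: assumes "disj_mor C f g"
  shows "push_I C Gm (pplus_mor C f g) = pplus_mor E (push_I C Gm f) (push_I C Gm g)"
  unfolding I_simp using C.plus_hom[OF assms] Gs_plus_mor[OF assms] by simp

lemma I_pmorph: "pmorph C E (\<lambda>X. X) (push_I C Gm)"
  unfolding pmorph_def
  using C.ps E_parsummable I_functor act_mor_E_G I_plus by simp

lemma H_functor: "is_functor E D Go (\<lambda>(X, Y, d). d)"
  unfolding is_functor_def hom_def
  using E_category D.cat G_ob G_id by (auto simp: D.c_comp_mor D.c_comp_dom D.c_comp_cod)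

lemma iso_E: assumes "(X, Y, d) \<in> Mor E" "is_iso D d" shows "is_iso E (X, Y, d)"
proof -
  obtain d' where d': "d \<in> Mor D" "d' \<in> Mor D" "Dom D d' = Cod D d" "Cod D d' = Dom D d"
    "Comp D d' d = Idm D (Dom D d)" "Comp D d d' = Idm D (Cod D d)" using isoE[OF assms(2)] by blast
  show ?thesis
    by (rule iso_intro[OF E_category, of _ "(Y, X, d')"]) (use assms(1) d' in auto)
qed

end




context psum
begin

lemma disj_sym: "disj_ob C X Y \<Longrightarrow> disj_ob C Y X" unfolding disj_ob_def by blast

lemma disj_plusR: assumes "disj_ob C X Y" "disj_ob C X Z" "disj_ob C Y Z"
  shows "disj_ob C X (pplus_ob C Y Z)"
  using assms supp_plus[OF assms(3)] plus_Obj[OF assms(3)] unfolding disj_ob_def by blast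

lemma disj_plusL: assumes "disj_ob C X Z" "disj_ob C Y Z" "disj_ob C X Y"
  shows "disj_ob C (pplus_ob C X Y) Z"
  using disj_sym disj_plusR assms by blast

lemma swap4_ob:
  assumes ab: "disj_ob C a b" and ac: "disj_ob C a c" and ad: "disj_ob C a d"
    and bc: "disj_ob C b c" and bd: "disj_ob C b d" and cd: "disj_ob C c d"
  shows "pplus_ob C (pplus_ob C a b) (pplus_ob C c d) = pplus_ob C (pplus_ob C a c) (pplus_ob C b d)"
proof -
  have "pplus_ob C (pplus_ob C a b) (pplus_ob C c d) = pplus_ob C a (pplus_ob C b (pplus_ob C c d))"
    using assoc_ob[OF ab disj_plusR[OF ac ad cd] disj_plusR[OF bc bd cd]] .
  also have "pplus_ob C b (pplus_ob C c d) = pplus_ob C (pplus_ob C b c) d" using assoc_ob[OF bc bd cd] by simp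
  also have "pplus_ob C b c = pplus_ob C c b" using comm_ob[OF bc] .
  also have "pplus_ob C (pplus_ob C c b) d = pplus_ob C c (pplus_ob C b d)" using assoc_ob[OF disj_sym[OF bc] cd bd] .
  also have "pplus_ob C a (pplus_ob C c (pplus_ob C b d)) = pplus_ob C (pplus_ob C a c) (pplus_ob C b d)"
    using assoc_ob[OF ac disj_plusR[OF ab ad bd] disj_plusR[OF disj_sym[OF bc] cd bd]] by simp
  finally show ?thesis .
qed

lemma dmor_sym: "disj_mor C f g \<Longrightarrow> disj_mor C g f" unfolding disj_mor_def using disj_sym by blast

lemma dmor_plusR: assumes "disj_mor C f g" "disj_mor C f h" "disj_mor C g h"
  shows "disj_mor C f (pplus_mor C g h)"
  using assms plus_hom[OF assms(3)] disj_plusR unfolding disj_mor_def by metis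

lemma swap4_mor:
  assumes ab: "disj_mor C a b" and ac: "disj_mor C a c" and ad: "disj_mor C a d"
    and bc: "disj_mor C b c" and bd: "disj_mor C b d" and cd: "disj_mor C c d"
  shows "pplus_mor C (pplus_mor C a b) (pplus_mor C c d) = pplus_mor C (pplus_mor C a c) (pplus_mor C b d)"
proof -
  have "pplus_mor C (pplus_mor C a b) (pplus_mor C c d) = pplus_mor C a (pplus_mor C b (pplus_mor C c d))"
    using assoc_mor[OF ab dmor_plusR[OF ac ad cd] dmor_plusR[OF bc bd cd]] .
  also have "pplus_mor C b (pplus_mor C c d) = pplus_mor C (pplus_mor C b c) d" using assoc_mor[OF bc bd cd] by simp
  also have "pplus_mor C b c = pplus_mor C c b" using comm_mor[OF bc] .
  also have "pplus_mor C (pplus_mor C c b) d = pplus_mor C c (pplus_mor C b d)" using assoc_mor[OF dmor_sym[OF bc] cd bd] .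
  also have "pplus_mor C a (pplus_mor C c (pplus_mor C b d)) = pplus_mor C (pplus_mor C a c) (pplus_mor C b d)"
    using assoc_mor[OF ac dmor_plusR[OF ab ad bd] dmor_plusR[OF dmor_sym[OF bc] cd bd]] by simp
  finally show ?thesis .
qed

end

locale main = psum2 C D
  for C :: "('a, 'b) pcat" and D :: "('c, 'd) pcat" +
  fixes Fo :: "'a \<Rightarrow> 'c" and Fm :: "'b \<Rightarrow> 'd" and mu :: "nat \<times> nat \<Rightarrow> nat"
  assumes F: "is_functor C D Fo Fm" and Fs: "preserves_sums C D Fo Fm"
    and mu: "inj_on mu ({0, 1} \<times> UNIV)"
begin

abbreviation "m0 \<equiv> (\<lambda>n. mu (0, n))"
abbreviation "m1 \<equiv> (\<lambda>n. mu (1, n))"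

lemma inj_m0: "inj m0"
proof (rule injI)
  fix x y assume "mu (0, x) = mu (0, y)"
  then have "(0::nat, x) = (0, y)" by (rule inj_onD[OF mu]) auto
  then show "x = y" by simp
qed
lemma inj_m1: "inj m1"
proof (rule injI)
  fix x y assume "mu (1, x) = mu (1, y)"
  then have "(1::nat, x) = (1, y)" by (rule inj_onD[OF mu]) auto
  then show "x = y" by simp
qed
lemma m01: "m0 a \<noteq> m1 b"
proof
  assume "mu (0, a) = mu (1, b)"
  then have "(0::nat, a) = (1, b)" by (rule inj_onD[OF mu]) auto
  then show False by simp
qed

lemma F_ob: "X \<in> Obj C \<Longrightarrow> Fo X \<in> Obj D" using F unfolding is_functor_def by blast
lemma F_mor: "f \<in> Mor C \<Longrightarrow> Fm f \<in> Mor D \<and> Dom D (Fm f) = Fo (Dom C f) \<and> Cod D (Fm f) = Fo (Cod C f)"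
  using F unfolding is_functor_def hom_def by blast
lemma F_id: "X \<in> Obj C \<Longrightarrow> Fm (Idm C X) = Idm D (Fo X)" using F unfolding is_functor_def by blast
lemma F_comp: "f \<in> Mor C \<Longrightarrow> g \<in> Mor C \<Longrightarrow> Cod C f = Dom C g \<Longrightarrow> Fm (Comp C g f) = Comp D (Fm g) (Fm f)"
  using F unfolding is_functor_def by blast
lemma Fs_zero: "Fo (pzero C) = pzero D" using Fs unfolding preserves_sums_def by blast
lemma Fs_disj: "disj_ob C X Y \<Longrightarrow> disj_ob D (Fo X) (Fo Y)" using Fs unfolding preserves_sums_def by blast
lemma Fs_plus: "disj_ob C X Y \<Longrightarrow> Fo (pplus_ob C X Y) = pplus_ob D (Fo X) (Fo Y)" using Fs unfolding preserves_sums_def by blast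
lemma Fs_plus_mor: "disj_mor C f g \<Longrightarrow> Fm (pplus_mor C f g) = pplus_mor D (Fm f) (Fm g)" using Fs unfolding preserves_sums_def by blast

abbreviation "Gob \<equiv> Fmu_ob D mu Fo"
abbreviation "Gmor \<equiv> Fmu_mor D mu Fm"

lemma Gob_simp: "Gob (X, Y) = pplus_ob D (act_ob D m0 (Fo X)) (act_ob D m1 Y)"
  unfolding Fmu_ob_def mu_ob_def by simp
lemma Gmor_simp: "Gmor (f, g) = pplus_mor D (act_mor D m0 m0 (Fm f)) (act_mor D m1 m1 g)"
  unfolding Fmu_mor_def mu_mor_def by simp

declare Gob_simp[simp] Gmor_simp[simp]

lemma disj01: assumes "A \<in> Obj D" "B \<in> Obj D" shows "disj_ob D (act_ob D m0 A) (act_ob D m1 B)"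
proof -
  have "supp D (act_ob D m0 A) \<inter> supp D (act_ob D m1 B) \<subseteq> range m0 \<inter> range m1"
    using D.supp_act[OF assms(1) inj_m0] D.supp_act[OF assms(2) inj_m1] by blast
  also have "range m0 \<inter> range m1 = {}" using m01 by blast
  finally show ?thesis
    using D.act_ob_Obj[OF inj_m0 assms(1)] D.act_ob_Obj[OF inj_m1 assms(2)] unfolding disj_ob_def by blast
qed

lemma dm01: assumes "a \<in> Mor D" "b \<in> Mor D" shows "disj_mor D (act_mor D m0 m0 a) (act_mor D m1 m1 b)"
  unfolding disj_mor_def using assms D.act_mor_hom[OF inj_m0 inj_m0 assms(1)] D.act_mor_hom[OF inj_m1 inj_m1 assms(2)]
    disj01 D.c_dom D.c_cod by simp

lemma G_functor: "is_functor (prod_pcat C D) D Gob Gmor"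
  unfolding is_functor_def
proof (intro conjI ballI allI impI)
  show "category (prod_pcat C D)" by (rule prod_category)
  show "category D" by (rule D.cat)
next
  fix P assume "P \<in> Obj (prod_pcat C D)"
  then obtain X Y where P: "P = (X, Y)" "X \<in> Obj C" "Y \<in> Obj D" by auto
  show "Gob P \<in> Obj D" unfolding P Gob_simp using D.plus_Obj disj01 F_ob P by blast
next
  fix f assume "f \<in> Mor (prod_pcat C D)"
  then obtain a b where f: "f = (a, b)" "a \<in> Mor C" "b \<in> Mor D" by auto
  show "Gmor f \<in> hom D (Gob (Dom (prod_pcat C D) f)) (Gob (Cod (prod_pcat C D) f))"
    unfolding f Gmor_simp hom_def using D.plus_hom[OF dm01[OF F_mor[OF f(2), THEN conjunct1] f(3)]]
      D.act_mor_hom[OF inj_m0 inj_m0] D.act_mor_hom[OF inj_m1 inj_m1] F_mor f Gob_simp by simp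
next
  fix P assume "P \<in> Obj (prod_pcat C D)"
  then obtain X Y where P: "P = (X, Y)" "X \<in> Obj C" "Y \<in> Obj D" by auto
  show "Gmor (Idm (prod_pcat C D) P) = Idm D (Gob P)"
    unfolding P Gmor_simp Gob_simp using F_id D.act_mor_Idm[OF inj_m0] D.act_mor_Idm[OF inj_m1] F_ob P
      D.plus_Idm[OF disj01] by (simp add: Gmor_simp)
next
  fix f g assume a: "f \<in> Mor (prod_pcat C D) \<and> g \<in> Mor (prod_pcat C D) \<and> Cod (prod_pcat C D) f = Dom (prod_pcat C D) g"
  obtain a b where f: "f = (a, b)" by (cases f)
  obtain a' b' where g: "g = (a', b')" by (cases g)
  have m: "a \<in> Mor C" "b \<in> Mor D" "a' \<in> Mor C" "b' \<in> Mor D" "Cod C a = Dom C a'" "Cod D b = Dom D b'"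
    using a f g by auto
  have e1: "act_mor D m0 m0 (Fm (Comp C a' a)) = Comp D (act_mor D m0 m0 (Fm a')) (act_mor D m0 m0 (Fm a))"
    using F_comp[OF m(1,3,5)] D.act_mor_comp[OF inj_m0 inj_m0 inj_m0, of "Fm a" "Fm a'"] F_mor m by simp
  have e2: "act_mor D m1 m1 (Comp D b' b) = Comp D (act_mor D m1 m1 b') (act_mor D m1 m1 b)"
    using D.act_mor_comp[OF inj_m1 inj_m1 inj_m1, of b b'] m by simp
  show "Gmor (Comp (prod_pcat C D) g f) = Comp D (Gmor g) (Gmor f)"
    unfolding f g Gmor_simp using e1 e2 D.plus_interchange[OF dm01 dm01] F_mor m
      D.act_mor_hom[OF inj_m0 inj_m0] D.act_mor_hom[OF inj_m1 inj_m1] by simp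
qed

lemma pw4: assumes A: "disj_ob D A A'" and B: "disj_ob D B B'"
  shows "disj_ob D (act_ob D m0 A) (act_ob D m1 B)" "disj_ob D (act_ob D m0 A) (act_ob D m0 A')"
    "disj_ob D (act_ob D m0 A) (act_ob D m1 B')" "disj_ob D (act_ob D m1 B) (act_ob D m0 A')"
    "disj_ob D (act_ob D m1 B) (act_ob D m1 B')" "disj_ob D (act_ob D m0 A') (act_ob D m1 B')"
  using A B disj01 D.disj_act[OF inj_m0 A] D.disj_act[OF inj_m1 B] D.disj_sym
  unfolding disj_ob_def by auto

lemma G_sums: "preserves_sums (prod_pcat C D) D Gob Gmor"
  unfolding preserves_sums_def
proof (intro conjI allI impI)
  show "Gob (pzero (prod_pcat C D)) = pzero D"
    using Gob_simp Fs_zero D.act_zero inj_m0 inj_m1 D.unit_ob D.zero_Obj by simp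
next
  fix P P' assume a: "disj_ob (prod_pcat C D) P P'"
  obtain X Y where P: "P = (X, Y)" by (cases P)
  obtain X' Y' where P': "P' = (X', Y')" by (cases P')
  have d: "disj_ob C X X'" "disj_ob D Y Y'" using disj_ob_prodD a P P' by auto
  note p = pw4[OF Fs_disj[OF d(1)] d(2)]
  show "disj_ob D (Gob P) (Gob P')"
    unfolding P P' Gob_simp
    by (rule D.disj_plusL[OF D.disj_plusR[OF p(2) p(3) p(6)] D.disj_plusR[OF p(4) p(5) p(6)] p(1)])
next
  fix P P' assume a: "disj_ob (prod_pcat C D) P P'"
  obtain X Y where P: "P = (X, Y)" by (cases P)
  obtain X' Y' where P': "P' = (X', Y')" by (cases P')
  have d: "disj_ob C X X'" "disj_ob D Y Y'" using disj_ob_prodD a P P' by auto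
  note p = pw4[OF Fs_disj[OF d(1)] d(2)]
  show "Gob (pplus_ob (prod_pcat C D) P P') = pplus_ob D (Gob P) (Gob P')"
    unfolding P P' Gob_simp using Fs_plus[OF d(1)] D.eq_ob[OF inj_m0 Fs_disj[OF d(1)]] D.eq_ob[OF inj_m1 d(2)]
      D.swap4_ob[OF p(2) p(1) p(3) D.disj_sym[OF p(4)] p(6) p(5)] by simp
next
  fix f f' assume a: "disj_mor (prod_pcat C D) f f'"
  obtain a b where f: "f = (a, b)" by (cases f)
  obtain a' b' where f': "f' = (a', b')" by (cases f')
  have d: "disj_mor C a a'" "disj_mor D b b'" using disj_mor_prodD a f f' by auto
  have dF: "disj_mor D (Fm a) (Fm a')"
    using d(1) F_mor Fs_disj unfolding disj_mor_def by simp
  have m: "a \<in> Mor C" "a' \<in> Mor C" "b \<in> Mor D" "b' \<in> Mor D" using d unfolding disj_mor_def by auto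
  have dd: "disj_ob D (Dom D (Fm a)) (Dom D (Fm a'))" "disj_ob D (Cod D (Fm a)) (Cod D (Fm a'))"
    "disj_ob D (Dom D b) (Dom D b')" "disj_ob D (Cod D b) (Cod D b')" using dF d unfolding disj_mor_def by auto
  note p1 = pw4[OF dd(1) dd(3)] and p2 = pw4[OF dd(2) dd(4)]
  note h = D.act_mor_hom[OF inj_m0 inj_m0] D.act_mor_hom[OF inj_m1 inj_m1]
  have q: "disj_mor D (act_mor D m0 m0 (Fm a)) (act_mor D m1 m1 b)"
    "disj_mor D (act_mor D m0 m0 (Fm a)) (act_mor D m0 m0 (Fm a'))"
    "disj_mor D (act_mor D m0 m0 (Fm a)) (act_mor D m1 m1 b')"
    "disj_mor D (act_mor D m1 m1 b) (act_mor D m0 m0 (Fm a'))"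
    "disj_mor D (act_mor D m1 m1 b) (act_mor D m1 m1 b')"
    "disj_mor D (act_mor D m0 m0 (Fm a')) (act_mor D m1 m1 b')"
    unfolding disj_mor_def using p1 p2 h F_mor m by simp_all
  show "Gmor (pplus_mor (prod_pcat C D) f f') = pplus_mor D (Gmor f) (Gmor f')"
    unfolding f f' Gmor_simp using Fs_plus_mor[OF d(1)] D.eq_mor[OF inj_m0 inj_m0 dF] D.eq_mor[OF inj_m1 inj_m1 d(2)]
      D.swap4_mor[OF q(2) q(1) q(3) D.dmor_sym[OF q(4)] q(6) q(5)] by simp
qed

sublocale Cy: pushl "prod_pcat C D" D Gob Gmor
  by unfold_locales (rule G_functor, rule G_sums)

end




lemma nat_isoD:
  assumes "nat_iso A B Fo Fm Go Gm \<eta>"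
  shows "X \<in> Obj A \<Longrightarrow> \<eta> X \<in> Mor B \<and> Dom B (\<eta> X) = Fo X \<and> Cod B (\<eta> X) = Go X \<and> is_iso B (\<eta> X)"
    and "f \<in> Mor A \<Longrightarrow> Comp B (\<eta> (Cod A f)) (Fm f) = Comp B (Gm f) (\<eta> (Dom A f))"
  using assms unfolding nat_iso_def hom_def by blast+

context psum
begin

lemma str_iso: assumes u: "inj u" and v: "inj v" and X: "X \<in> Obj C"
  shows "is_iso C (act_mor C v u (Idm C X))"
  by (rule iso_intro[OF cat, of _ "act_mor C u v (Idm C X)"])
    (use str_hom[OF u v X] str_hom[OF v u X] str_comp[OF u v u X] str_comp[OF v u v X] act_mor_Idm[OF u X] act_mor_Idm[OF v X] in auto)

end

context psum2
begin

lemma J1_pmorph: "pmorph C (prod_pcat C D) (\<lambda>X. (X, pzero D)) (\<lambda>f. (f, Idm D (pzero D)))"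
  unfolding pmorph_def is_functor_def hom_def
  using C.ps P.ps C.cat prod_category D.zero_Obj D.c_id_mor D.c_id_dom D.c_id_cod D.IdId
    C.c_dom C.c_cod D.act_zero D.act_mor_zero C.unit_ob D.unit_ob D.unit_mor
  by (simp add: C.act_ob_Obj)

lemma J2_pmorph: "pmorph D (prod_pcat C D) (\<lambda>Y. (pzero C, Y)) (\<lambda>g. (Idm C (pzero C), g))"
  unfolding pmorph_def is_functor_def hom_def
  using D.ps P.ps D.cat prod_category C.zero_Obj C.c_id_mor C.c_id_dom C.c_id_cod C.IdId
    D.c_dom D.c_cod C.act_zero C.act_mor_zero D.unit_ob C.unit_ob C.unit_mor
  by simp

lemma J1_disj: "disj_ob C X Y \<Longrightarrow> disj_ob (prod_pcat C D) (X, pzero D) (Y, pzero D)"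
  unfolding disj_ob_prod using D.zero_Obj D.supp_zero by (simp add: disj_ob_def)

lemma J2_disj: "disj_ob D X Y \<Longrightarrow> disj_ob (prod_pcat C D) (pzero C, X) (pzero C, Y)"
  unfolding disj_ob_prod using C.zero_Obj C.supp_zero by (simp add: disj_ob_def)

end

context main
begin

lemma Cyl_eq: "Cyl C D mu Fo Fm = push_pcat (prod_pcat C D) D Gob Gmor" by (simp add: Cyl_def)

lemma pm1: "pmorph C (Cyl C D mu Fo Fm) (I1_ob D) (I1_mor C D mu Fm)"
proof -
  have e1: "I1_ob D = (\<lambda>X. X) \<circ> (\<lambda>X. (X, pzero D))" by (rule ext) (simp add: I1_ob_def)
  have e2: "I1_mor C D mu Fm = push_I (prod_pcat C D) Gmor \<circ> (\<lambda>f. (f, Idm D (pzero D)))"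
    by (rule ext) (simp add: I1_mor_def)
  show ?thesis unfolding e1 e2 Cyl_eq by (rule pmorph_comp[OF J1_pmorph Cy.I_pmorph J1_disj])
qed

lemma pm2: "pmorph D (Cyl C D mu Fo Fm) (I2_ob C) (I2_mor C D mu Fm)"
proof -
  have e1: "I2_ob C = (\<lambda>X. X) \<circ> (\<lambda>Y. (pzero C, Y))" by (rule ext) (simp add: I2_ob_def)
  have e2: "I2_mor C D mu Fm = push_I (prod_pcat C D) Gmor \<circ> (\<lambda>g. (Idm C (pzero C), g))"
    by (rule ext) (simp add: I2_mor_def)
  show ?thesis unfolding e1 e2 Cyl_eq by (rule pmorph_comp[OF J2_pmorph Cy.I_pmorph J2_disj])
qed

lemma Gob0: "Y \<in> Obj D \<Longrightarrow> Gob (pzero C, Y) = act_ob D m1 Y"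
  using Fs_zero D.act_zero[OF inj_m0] D.unit_ob D.act_ob_Obj[OF inj_m1] by simp

lemma Gob1: "X \<in> Obj C \<Longrightarrow> Gob (X, pzero D) = act_ob D m0 (Fo X)"
  using D.act_zero[OF inj_m1] D.unit_ob D.act_ob_Obj[OF inj_m0] F_ob by simp

lemma I2_mor_simp: "g \<in> Mor D \<Longrightarrow> I2_mor C D mu Fm g = ((pzero C, Dom D g), (pzero C, Cod D g), act_mor D m1 m1 g)"
  unfolding I2_mor_def Cy.I_simp using F_id C.zero_Obj Fs_zero D.act_mor_zero[OF inj_m0 inj_m0]
    D.unit_mor D.act_mor_Mor[OF inj_m1 inj_m1] C.c_id_dom C.c_id_cod by simp

lemma I1_mor_simp: "f \<in> Mor C \<Longrightarrow> I1_mor C D mu Fm f = ((Dom C f, pzero D), (Cod C f, pzero D), act_mor D m0 m0 (Fm f))"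
  unfolding I1_mor_def Cy.I_simp using D.zero_Obj D.act_mor_Idm[OF inj_m1] D.act_zero[OF inj_m1]
    D.unit_mor D.act_mor_Mor[OF inj_m0 inj_m0] F_mor D.c_id_dom D.c_id_cod by simp

lemma equiv2: "equivalence D (Cyl C D mu Fo Fm) (I2_ob C) (I2_mor C D mu Fm)"
proof -
  let ?E = "Cyl C D mu Fo Fm"
  let ?Hm = "\<lambda>(X :: 'a \<times> 'c, Y :: 'a \<times> 'c, d :: 'd). d"
  have fI: "is_functor D ?E (I2_ob C) (I2_mor C D mu Fm)" using pm2 unfolding pmorph_def by blast
  have fH: "is_functor ?E D Gob ?Hm" unfolding Cyl_eq by (rule Cy.H_functor)
  define \<eta> where "\<eta> = (\<lambda>Y. act_mor D m1 id (Idm D Y))"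
  define \<epsilon> where "\<epsilon> = (\<lambda>P. ((pzero C, Gob P), P, act_mor D id m1 (Idm D (Gob P))))"
  have n1: "nat_iso D D (\<lambda>X. X) (\<lambda>f. f) (Gob \<circ> I2_ob C) (?Hm \<circ> I2_mor C D mu Fm) \<eta>"
    unfolding nat_iso_def
  proof (intro conjI ballI)
    show "is_functor D D (\<lambda>X. X) (\<lambda>f. f)" by (rule functor_id[OF D.cat])
    show "is_functor D D (Gob \<circ> I2_ob C) (?Hm \<circ> I2_mor C D mu Fm)" by (rule functor_comp[OF fI fH])
  next
    fix Y assume Y: "Y \<in> Obj D"
    show "\<eta> Y \<in> hom D Y ((Gob \<circ> I2_ob C) Y)"
      unfolding hom_def \<eta>_def using D.str_hom[OF _ inj_m1 Y, of id] D.act_ob_id Y Gob0 by (simp add: I2_ob_def)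
    show "is_iso D (\<eta> Y)" unfolding \<eta>_def by (rule D.str_iso[OF _ inj_m1 Y]) simp
  next
    fix g assume g: "g \<in> Mor D"
    show "Comp D (\<eta> (Cod D g)) g = Comp D ((?Hm \<circ> I2_mor C D mu Fm) g) (\<eta> (Dom D g))"
      unfolding \<eta>_def using I2_mor_simp[OF g] D.nat_str2[OF _ inj_m1 g, of id] D.nat_str[OF _ inj_m1 g, of id]
        D.act_mor_id[OF g] by simp
  qed
  have n2: "nat_iso ?E ?E (I2_ob C \<circ> Gob) (I2_mor C D mu Fm \<circ> ?Hm) (\<lambda>X. X) (\<lambda>f. f) \<epsilon>"
    unfolding nat_iso_def
  proof (intro conjI ballI)
    show "is_functor ?E ?E (I2_ob C \<circ> Gob) (I2_mor C D mu Fm \<circ> ?Hm)" by (rule functor_comp[OF fH fI])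
    show "is_functor ?E ?E (\<lambda>X. X) (\<lambda>f. f)" unfolding Cyl_eq by (rule functor_id[OF Cy.E_category])
  next
    fix P assume P: "P \<in> Obj ?E"
    have GP: "Gob P \<in> Obj D" using Cy.G_ob P unfolding Cyl_eq by simp
    have m: "\<epsilon> P \<in> Mor ?E"
      unfolding \<epsilon>_def Cyl_eq using P C.zero_Obj GP D.str_hom[OF inj_m1 _ GP, of id] D.act_ob_id Gob0[OF GP]
      by (simp add: Cyl_eq)
    show "\<epsilon> P \<in> hom ?E ((I2_ob C \<circ> Gob) P) P"
      using m unfolding hom_def \<epsilon>_def Cyl_eq by (simp add: I2_ob_def)
    show "is_iso ?E (\<epsilon> P)"
      using m unfolding \<epsilon>_def Cyl_eq by (intro Cy.iso_E D.str_iso[OF inj_m1 _ GP]) simp_all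
  next
    fix f assume f: "f \<in> Mor ?E"
    obtain P Q d where fd: "f = (P, Q, d)" by (rule prod_cases3)
    have d: "d \<in> Mor D" "Dom D d = Gob P" "Cod D d = Gob Q" using f fd unfolding Cyl_eq by auto
    have e: "Comp D (act_mor D id m1 (Idm D (Cod D d))) (act_mor D m1 m1 d) = Comp D d (act_mor D id m1 (Idm D (Dom D d)))"
      using D.nat_str2[OF inj_m1 _ d(1), of id] D.nat_str[OF inj_m1 _ d(1), of id] D.act_mor_id[OF d(1)] by simp
    show "Comp ?E (\<epsilon> (Cod ?E f)) ((I2_mor C D mu Fm \<circ> ?Hm) f) = Comp ?E f (\<epsilon> (Dom ?E f))"
      unfolding fd \<epsilon>_def Cyl_eq using I2_mor_simp[OF d(1)] d e by simp
  qed
  show ?thesis unfolding equivalence_def using fI fH n1 n2 by blast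
qed


lemma equiv1:
  assumes eqF: "equivalence C D Fo Fm"
  shows "equivalence C (Cyl C D mu Fo Fm) (I1_ob D) (I1_mor C D mu Fm)"
proof -
  let ?E = "Cyl C D mu Fo Fm"
  let ?Hm = "\<lambda>(X :: 'a \<times> 'c, Y :: 'a \<times> 'c, d :: 'd). d"
  obtain Go' :: "'c \<Rightarrow> 'a" and Gm' :: "'d \<Rightarrow> 'b" and \<eta>' \<epsilon>' where
    G': "is_functor D C Go' Gm'" and
    n': "nat_iso C C (\<lambda>X. X) (\<lambda>f. f) (Go' \<circ> Fo) (Gm' \<circ> Fm) \<eta>'" and
    e': "nat_iso D D (Fo \<circ> Go') (Fm \<circ> Gm') (\<lambda>X. X) (\<lambda>f. f) \<epsilon>'"
    using eqF unfolding equivalence_def by blast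
  have fI: "is_functor C ?E (I1_ob D) (I1_mor C D mu Fm)" using pm1 unfolding pmorph_def by blast
  have fH: "is_functor ?E D Gob ?Hm" unfolding Cyl_eq by (rule Cy.H_functor)
  have fK: "is_functor ?E C (Go' \<circ> Gob) (Gm' \<circ> ?Hm)" by (rule functor_comp[OF fH G'])
  define s where "s = (\<lambda>X. act_mor D m0 id (Idm D X))"
  define t where "t = (\<lambda>X. act_mor D id m0 (Idm D X))"
  define \<eta> where "\<eta> = (\<lambda>X. Comp C (Gm' (s (Fo X))) (\<eta>' X))"
  define \<epsilon> where "\<epsilon> = (\<lambda>P. ((Go' (Gob P), pzero D), P, Comp D (\<epsilon>' (Gob P)) (t (Fo (Go' (Gob P))))))"
  have s: "s X \<in> Mor D \<and> Dom D (s X) = X \<and> Cod D (s X) = act_ob D m0 X \<and> is_iso D (s X)" if "X \<in> Obj D" for X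
    unfolding s_def using D.str_hom[OF _ inj_m0 that, of id] D.act_ob_id[OF that] D.str_iso[OF _ inj_m0 that, of id] by simp
  have t: "t X \<in> Mor D \<and> Dom D (t X) = act_ob D m0 X \<and> Cod D (t X) = X \<and> is_iso D (t X)" if "X \<in> Obj D" for X
    unfolding t_def using D.str_hom[OF inj_m0 _ that, of id] D.act_ob_id[OF that] D.str_iso[OF inj_m0 _ that, of id] by simp
  have n1: "nat_iso C C (\<lambda>X. X) (\<lambda>f. f) ((Go' \<circ> Gob) \<circ> I1_ob D) ((Gm' \<circ> ?Hm) \<circ> I1_mor C D mu Fm) \<eta>"
    unfolding nat_iso_def
  proof (intro conjI ballI)
    show "is_functor C C (\<lambda>X. X) (\<lambda>f. f)" by (rule functor_id[OF C.cat])
    show "is_functor C C ((Go' \<circ> Gob) \<circ> I1_ob D) ((Gm' \<circ> ?Hm) \<circ> I1_mor C D mu Fm)" by (rule functor_comp[OF fI fK])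
  next
    fix X assume X: "X \<in> Obj C"
    have FX: "Fo X \<in> Obj D" using F_ob X by blast
    note sX = s[OF FX]
    have e: "\<eta>' X \<in> Mor C" "Dom C (\<eta>' X) = X" "Cod C (\<eta>' X) = Go' (Fo X)" "is_iso C (\<eta>' X)"
      using nat_isoD(1)[OF n' X] by auto
    have g: "Gm' (s (Fo X)) \<in> Mor C" "Dom C (Gm' (s (Fo X))) = Go' (Fo X)" "Cod C (Gm' (s (Fo X))) = Go' (act_ob D m0 (Fo X))"
      using fun_mor[OF G'] fun_dom[OF G'] fun_cod[OF G'] sX by auto
    show "\<eta> X \<in> hom C X (((Go' \<circ> Gob) \<circ> I1_ob D) X)"
      unfolding hom_def \<eta>_def using e g C.c_comp_mor C.c_comp_dom C.c_comp_cod Gob1[OF X] by (simp add: I1_ob_def)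
    show "is_iso C (\<eta> X)"
      unfolding \<eta>_def by (rule iso_comp[OF C.cat e(4) functor_iso[OF G']]) (use sX e g in auto)
  next
    fix f assume f: "f \<in> Mor C"
    let ?X = "Dom C f" let ?Y = "Cod C f"
    have X: "?X \<in> Obj C" and Y: "?Y \<in> Obj C" using C.c_dom C.c_cod f by auto
    have Ff: "Fm f \<in> Mor D" "Dom D (Fm f) = Fo ?X" "Cod D (Fm f) = Fo ?Y" using F_mor f by auto
    have FX: "Fo ?X \<in> Obj D" and FY: "Fo ?Y \<in> Obj D" using F_ob X Y by auto
    note sX = s[OF FX] and sY = s[OF FY]
    have eX: "\<eta>' ?X \<in> Mor C" "Dom C (\<eta>' ?X) = ?X" "Cod C (\<eta>' ?X) = Go' (Fo ?X)"
      using nat_isoD(1)[OF n' X] by auto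
    have eY: "\<eta>' ?Y \<in> Mor C" "Dom C (\<eta>' ?Y) = ?Y" "Cod C (\<eta>' ?Y) = Go' (Fo ?Y)"
      using nat_isoD(1)[OF n' Y] by auto
    have nat': "Comp C (\<eta>' ?Y) f = Comp C (Gm' (Fm f)) (\<eta>' ?X)" using nat_isoD(2)[OF n' f] by simp
    have m0f: "act_mor D m0 m0 (Fm f) \<in> Mor D" "Dom D (act_mor D m0 m0 (Fm f)) = act_ob D m0 (Fo ?X)"
      "Cod D (act_mor D m0 m0 (Fm f)) = act_ob D m0 (Fo ?Y)" using D.act_mor_hom[OF inj_m0 inj_m0 Ff(1)] Ff by auto
    have sq: "Comp D (s (Fo ?Y)) (Fm f) = Comp D (act_mor D m0 m0 (Fm f)) (s (Fo ?X))"
      unfolding s_def using D.nat_str2[OF _ inj_m0 Ff(1), of id] D.nat_str[OF _ inj_m0 Ff(1), of id] D.act_mor_id[OF Ff(1)] Ff by simp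
    have Gsq: "Comp C (Gm' (s (Fo ?Y))) (Gm' (Fm f)) = Comp C (Gm' (act_mor D m0 m0 (Fm f))) (Gm' (s (Fo ?X)))"
      using fun_comp[OF G' Ff(1) sY[THEN conjunct1]] fun_comp[OF G' sX[THEN conjunct1] m0f(1)] sq sX sY Ff m0f by simp
    note GsX = fun_mor[OF G' sX[THEN conjunct1]] fun_dom[OF G' sX[THEN conjunct1]] fun_cod[OF G' sX[THEN conjunct1]]
    note GsY = fun_mor[OF G' sY[THEN conjunct1]] fun_dom[OF G' sY[THEN conjunct1]] fun_cod[OF G' sY[THEN conjunct1]]
    note GFf = fun_mor[OF G' Ff(1)] fun_dom[OF G' Ff(1)] fun_cod[OF G' Ff(1)]
    note Gm0 = fun_mor[OF G' m0f(1)] fun_dom[OF G' m0f(1)] fun_cod[OF G' m0f(1)]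
    have "Comp C (\<eta> ?Y) f = Comp C (Gm' (s (Fo ?Y))) (Comp C (\<eta>' ?Y) f)"
      unfolding \<eta>_def using C.c_assoc[OF f eY(1) GsY(1)] eY GsY sY by simp
    also have "\<dots> = Comp C (Gm' (s (Fo ?Y))) (Comp C (Gm' (Fm f)) (\<eta>' ?X))" using nat' by simp
    also have "\<dots> = Comp C (Comp C (Gm' (s (Fo ?Y))) (Gm' (Fm f))) (\<eta>' ?X)"
      using C.c_assoc[OF eX(1) GFf(1) GsY(1)] eX GFf GsY sY Ff by simp
    also have "\<dots> = Comp C (Comp C (Gm' (act_mor D m0 m0 (Fm f))) (Gm' (s (Fo ?X)))) (\<eta>' ?X)" using Gsq by simp
    also have "\<dots> = Comp C (Gm' (act_mor D m0 m0 (Fm f))) (\<eta> ?X)"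
      unfolding \<eta>_def using C.c_assoc[OF eX(1) GsX(1) Gm0(1)] eX GsX Gm0 sX m0f by simp
    finally show "Comp C (\<eta> (Cod C f)) f = Comp C (((Gm' \<circ> ?Hm) \<circ> I1_mor C D mu Fm) f) (\<eta> (Dom C f))"
      using I1_mor_simp[OF f] by simp
  qed
  have n2: "nat_iso ?E ?E (I1_ob D \<circ> (Go' \<circ> Gob)) (I1_mor C D mu Fm \<circ> (Gm' \<circ> ?Hm)) (\<lambda>X. X) (\<lambda>f. f) \<epsilon>"
    unfolding nat_iso_def
  proof (intro conjI ballI)
    show "is_functor ?E ?E (I1_ob D \<circ> (Go' \<circ> Gob)) (I1_mor C D mu Fm \<circ> (Gm' \<circ> ?Hm))" by (rule functor_comp[OF fK fI])
    show "is_functor ?E ?E (\<lambda>X. X) (\<lambda>f. f)" unfolding Cyl_eq by (rule functor_id[OF Cy.E_category])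
  next
    fix P assume P: "P \<in> Obj ?E"
    have GP: "Gob P \<in> Obj D" using Cy.G_ob P unfolding Cyl_eq by simp
    have GGP: "Go' (Gob P) \<in> Obj C" using fun_ob[OF G' GP] .
    have FGGP: "Fo (Go' (Gob P)) \<in> Obj D" using F_ob[OF GGP] .
    note tP = t[OF FGGP]
    have eP: "\<epsilon>' (Gob P) \<in> Mor D" "Dom D (\<epsilon>' (Gob P)) = Fo (Go' (Gob P))" "Cod D (\<epsilon>' (Gob P)) = Gob P"
      "is_iso D (\<epsilon>' (Gob P))" using nat_isoD(1)[OF e' GP] by auto
    have c: "Comp D (\<epsilon>' (Gob P)) (t (Fo (Go' (Gob P)))) \<in> Mor D"
      "Dom D (Comp D (\<epsilon>' (Gob P)) (t (Fo (Go' (Gob P))))) = act_ob D m0 (Fo (Go' (Gob P)))"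
      "Cod D (Comp D (\<epsilon>' (Gob P)) (t (Fo (Go' (Gob P))))) = Gob P"
      using D.c_comp_mor D.c_comp_dom D.c_comp_cod tP eP by auto
    have m: "\<epsilon> P \<in> Mor ?E"
      unfolding \<epsilon>_def Cyl_eq using P D.zero_Obj GGP c Gob1[OF GGP] by (simp add: Cyl_eq)
    show "\<epsilon> P \<in> hom ?E ((I1_ob D \<circ> (Go' \<circ> Gob)) P) P"
      using m unfolding hom_def \<epsilon>_def Cyl_eq by (simp add: I1_ob_def)
    show "is_iso ?E (\<epsilon> P)"
      using m unfolding \<epsilon>_def Cyl_eq
      by (intro Cy.iso_E iso_comp[OF D.cat]) (use tP eP in simp_all)
  next
    fix f assume f: "f \<in> Mor ?E"
    obtain P Q d where fd: "f = (P, Q, d)" by (rule prod_cases3)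
    have d: "d \<in> Mor D" "Dom D d = Gob P" "Cod D d = Gob Q" and P: "P \<in> Obj (prod_pcat C D)" and Q: "Q \<in> Obj (prod_pcat C D)"
      using f fd unfolding Cyl_eq by auto
    have GP: "Gob P \<in> Obj D" and GQ: "Gob Q \<in> Obj D" using Cy.G_ob P Q by auto
    have Gd: "Gm' d \<in> Mor C" "Dom C (Gm' d) = Go' (Gob P)" "Cod C (Gm' d) = Go' (Gob Q)"
      using fun_mor[OF G' d(1)] fun_dom[OF G' d(1)] fun_cod[OF G' d(1)] d by auto
    let ?h = "Fm (Gm' d)"
    have h: "?h \<in> Mor D" "Dom D ?h = Fo (Go' (Gob P))" "Cod D ?h = Fo (Go' (Gob Q))" using F_mor Gd by auto
    have FP: "Fo (Go' (Gob P)) \<in> Obj D" and FQ: "Fo (Go' (Gob Q)) \<in> Obj D" using F_ob fun_ob[OF G'] GP GQ by auto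
    note tP = t[OF FP] and tQ = t[OF FQ]
    have eP: "\<epsilon>' (Gob P) \<in> Mor D" "Dom D (\<epsilon>' (Gob P)) = Fo (Go' (Gob P))" "Cod D (\<epsilon>' (Gob P)) = Gob P"
      using nat_isoD(1)[OF e' GP] by auto
    have eQ: "\<epsilon>' (Gob Q) \<in> Mor D" "Dom D (\<epsilon>' (Gob Q)) = Fo (Go' (Gob Q))" "Cod D (\<epsilon>' (Gob Q)) = Gob Q"
      using nat_isoD(1)[OF e' GQ] by auto
    have nat': "Comp D (\<epsilon>' (Gob Q)) ?h = Comp D d (\<epsilon>' (Gob P))" using nat_isoD(2)[OF e' d(1)] d by simp
    have m0h: "act_mor D m0 m0 ?h \<in> Mor D" "Dom D (act_mor D m0 m0 ?h) = act_ob D m0 (Fo (Go' (Gob P)))"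
      "Cod D (act_mor D m0 m0 ?h) = act_ob D m0 (Fo (Go' (Gob Q)))" using D.act_mor_hom[OF inj_m0 inj_m0 h(1)] h by auto
    have sq: "Comp D (t (Fo (Go' (Gob Q)))) (act_mor D m0 m0 ?h) = Comp D ?h (t (Fo (Go' (Gob P))))"
      unfolding t_def using D.nat_str2[OF inj_m0 _ h(1), of id] D.nat_str[OF inj_m0 _ h(1), of id] D.act_mor_id[OF h(1)] h by simp
    have "Comp D (Comp D (\<epsilon>' (Gob Q)) (t (Fo (Go' (Gob Q))))) (act_mor D m0 m0 ?h)
        = Comp D (\<epsilon>' (Gob Q)) (Comp D (t (Fo (Go' (Gob Q)))) (act_mor D m0 m0 ?h))"
      using D.c_assoc[OF m0h(1) tQ[THEN conjunct1] eQ(1)] m0h tQ eQ by simp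
    also have "\<dots> = Comp D (\<epsilon>' (Gob Q)) (Comp D ?h (t (Fo (Go' (Gob P)))))" using sq by simp
    also have "\<dots> = Comp D (Comp D (\<epsilon>' (Gob Q)) ?h) (t (Fo (Go' (Gob P))))"
      using D.c_assoc[OF tP[THEN conjunct1] h(1) eQ(1)] tP h eQ by simp
    also have "\<dots> = Comp D (Comp D d (\<epsilon>' (Gob P))) (t (Fo (Go' (Gob P))))" using nat' by simp
    also have "\<dots> = Comp D d (Comp D (\<epsilon>' (Gob P)) (t (Fo (Go' (Gob P)))))"
      using D.c_assoc[OF tP[THEN conjunct1] eP(1) d(1)] tP eP d by simp
    finally have key: "Comp D (Comp D (\<epsilon>' (Gob Q)) (t (Fo (Go' (Gob Q))))) (act_mor D m0 m0 ?h)
        = Comp D d (Comp D (\<epsilon>' (Gob P)) (t (Fo (Go' (Gob P)))))" .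
    show "Comp ?E (\<epsilon> (Cod ?E f)) ((I1_mor C D mu Fm \<circ> (Gm' \<circ> ?Hm)) f) = Comp ?E f (\<epsilon> (Dom ?E f))"
      unfolding fd \<epsilon>_def Cyl_eq using I1_mor_simp[OF Gd(1)] Gd key by simp
  qed
  show ?thesis unfolding equivalence_def using fI fK n1 n2 by blast
qed

end


theorem corollary3p14:
  fixes C :: "('a, 'b) pcat" and D :: "('c, 'd) pcat"
    and Fo :: "'a \<Rightarrow> 'c" and Fm :: "'b \<Rightarrow> 'd"
    and mu :: "nat \<times> nat \<Rightarrow> nat"
  assumes "parsummable C" and "parsummable D"
    and "is_functor C D Fo Fm" and "preserves_sums C D Fo Fm"
    and "inj_on mu ({0, 1} \<times> UNIV)"
  shows "is_functor (prod_pcat C D) D (Fmu_ob D mu Fo) (Fmu_mor D mu Fm)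
       \<and> preserves_sums (prod_pcat C D) D (Fmu_ob D mu Fo) (Fmu_mor D mu Fm)
       \<and> parsummable (Cyl C D mu Fo Fm)
       \<and> pmorph C (Cyl C D mu Fo Fm) (I1_ob D) (I1_mor C D mu Fm)
       \<and> pmorph D (Cyl C D mu Fo Fm) (I2_ob C) (I2_mor C D mu Fm)
       \<and> (equivalence C D Fo Fm \<longrightarrow> equivalence C (Cyl C D mu Fo Fm) (I1_ob D) (I1_mor C D mu Fm))
       \<and> equivalence D (Cyl C D mu Fo Fm) (I2_ob C) (I2_mor C D mu Fm)"
proof -
  interpret M: main C D Fo Fm mu
    by (rule main.intro, rule psum2.intro, (rule psum.intro, fact)+, rule main_axioms.intro, fact+)
  show ?thesis
    using M.G_functor M.G_sums M.Cy.E_parsummable M.pm1 M.pm2 M.equiv1 M.equiv2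
    unfolding M.Cyl_eq by blast
qed

end
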